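(* Let $g\in C^\omega(\mathbb{R})$ with $g(v)>0$ for $v>0$, and $\beta\in\mathbb{R}$. (1) Let $y=(\rho,r)$ be a toy tip solution and let $(0,s^* )$ be an interval on which $\rho>0$ (so $y(s)\in M_1$). Fix $s_1\in(0,s^* )$ and let $\tau_y$ solve $\frac{d\tau_y}{ds}=\frac{\rho}{r}$, $\tau_y(s_1)=0$ on $(0,s^* )$. Then $\tau_y$ is a diffeomorphism onto its range, $\lim_{s\to0^+}\tau_y(s)=-\infty$, and $t\mapsto\Phi\big(y(\tau_y^{-1}(t))\big)$ is a toy $t$-tip solution. (2) Let $\hat y=(\eta,w)$ be a toy $t$-tip solution taking values in $N_0$, defined on an interval $J$ unbounded below. Let $(\hat\rho,\hat r)=\Phi^{-1}(\eta,w)$, fix $t_0\in J$ and let $\sigma$ solve $\frac{d\sigma}{dt}=\frac{\hat r}{\hat\rho}$, $\sigma(t_0)=0$. Then $\sigma$ is a diffeomorphism onto its range, $s_0:=\lim_{t\to-\infty}\sigma(t)$ is finite, and $s\mapsto(\hat\rho,\hat r)\big(\sigma^{-1}(s+s_0)\big)$ is a solution of the toy model satisfying the defining conditions of a toy tip solution.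
   Context: Toy model: $\rho'=\frac32\frac{1-\rho^2}{r}\Big(-1+\frac{\sqrt{1-\rho^2}(\beta r^2g(r^2)+\rho)}{r}\Big)$, $r'=\rho$ (prime $=d/ds$) on $M_0=(-1,1)\times\mathbb{R}_{>0}$. A toy tip solution is a solution $(\rho,r)$ on an interval $(0,s_{\max})$ with: (S1) $\lim_{s\to0^+}\rho=1$, $\lim r=0$, $\lim\sqrt{1-\rho^2}/r=\eta_0$ for some $\eta_0>0$; (S2) there exist $s_0>0$ and real-analytic $G:(-a,a)\to\mathbb{R}_{>0}$, $a=r(s_0)^2$, with $\rho(s)=G(r(s)^2)$ on $(0,s_0)$; and $\rho'<0,\rho>0$ on some $(0,s_0)$. $M_1=(0,1)\times\mathbb{R}_{>0}$; $N_1=\{(\eta,w)\in\mathbb{R}_{>0}\times\mathbb{R}:\eta^2w<1\}$; $N_0=\{(\eta,w)\in N_1: w>0\}$; $\Phi:M_1\to N_0$, $\Phi(\rho,r)=\big(\sqrt{1-\rho^2}/r,\ r^2\big)$ (a diffeomorphism). The $(\eta,w)$-system on $N_1$: $\frac{d\eta}{dt}=\frac{\eta}{2}\big(1-3\eta\sqrt{1-\eta^2w}\big)-\frac32\beta\eta^2wg(w)$, $\frac{dw}{dt}=2w$. A toy $t$-tip solution is a solution $(\eta,w)$ of this system, defined on an interval unbounded below, with (S'1) $\lim_{t\to-\infty}\eta(t)=1/3$, $\lim_{t\to-\infty}w(t)=0$, and (S'2) there exist $t_0$ and a real-analytic $G:(-a,a)\to\mathbb{R}$ with $a=w(t_0)$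 such that $\eta(t)=G(w(t))$ for all $t\in(-\infty,t_0)$. *)

theory Defs
  imports "HOL-Analysis.Analysis" "HOL-Library.Extended_Real"
begin

definition real_analytic_on :: "(real \<Rightarrow> real) \<Rightarrow> real set \<Rightarrow> bool" where
  "real_analytic_on G S \<longleftrightarrow>
     (\<forall>x\<in>S. \<exists>e>0. \<exists>c::nat \<Rightarrow> real.
        \<forall>y. \<bar>y - x\<bar> < e \<longrightarrow> (\<lambda>n. c n * (y - x) ^ n) sums G y)"

definition toy_rhs :: "real \<Rightarrow> (real \<Rightarrow> real) \<Rightarrow> real \<Rightarrow> real \<Rightarrow> real" where
  "toy_rhs \<beta> g \<rho> r =
     3/2 * (1 - \<rho>\<^sup>2) / r * (-1 + sqrt (1 - \<rho>\<^sup>2) * (\<beta> * r\<^sup>2 * g (r\<^sup>2) + \<rho>) / r)"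

definition eta_rhs :: "real \<Rightarrow> (real \<Rightarrow> real) \<Rightarrow> real \<Rightarrow> real \<Rightarrow> real" where
  "eta_rhs \<beta> g \<eta> w =
     \<eta> / 2 * (1 - 3 * \<eta> * sqrt (1 - \<eta>\<^sup>2 * w)) - 3/2 * \<beta> * \<eta>\<^sup>2 * w * g w"

definition M0 :: "(real \<times> real) set" where "M0 = {-1<..<1} \<times> {0<..}"
definition M1 :: "(real \<times> real) set" where "M1 = {0<..<1} \<times> {0<..}"
definition N1 :: "(real \<times> real) set" where "N1 = {(\<eta>, w). \<eta> > 0 \<and> \<eta>\<^sup>2 * w < 1}"
definition N0 :: "(real \<times> real) set" where "N0 = {(\<eta>, w). (\<eta>, w) \<in> N1 \<and> w > 0}"

definition Phi :: "real \<times> real \<Rightarrow> real \<times> real" where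
  "Phi = (\<lambda>(\<rho>, r). (sqrt (1 - \<rho>\<^sup>2) / r, r\<^sup>2))"

definition ivl0 :: "ereal \<Rightarrow> real set" where
  "ivl0 smax = {s. 0 < s \<and> ereal s < smax}"

definition toy_solution :: "real \<Rightarrow> (real \<Rightarrow> real) \<Rightarrow> (real \<Rightarrow> real) \<Rightarrow> (real \<Rightarrow> real) \<Rightarrow> real set \<Rightarrow> bool" where
  "toy_solution \<beta> g \<rho> r I \<longleftrightarrow>
     (\<forall>s\<in>I. (\<rho> s, r s) \<in> M0 \<and>
        (\<rho> has_real_derivative toy_rhs \<beta> g (\<rho> s) (r s)) (at s) \<and>
        (r has_real_derivative \<rho> s) (at s))"

definition toy_tip_solution :: "real \<Rightarrow> (real \<Rightarrow> real) \<Rightarrow> (real \<Rightarrow> real) \<Rightarrow> (real \<Rightarrow> real) \<Rightarrow> ereal \<Rightarrow> bool" where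
  "toy_tip_solution \<beta> g \<rho> r smax \<longleftrightarrow>
     0 < smax \<and> toy_solution \<beta> g \<rho> r (ivl0 smax) \<and>
     (\<rho> \<longlongrightarrow> 1) (at_right 0) \<and> (r \<longlongrightarrow> 0) (at_right 0) \<and>
     (\<exists>\<eta>0>0. ((\<lambda>s. sqrt (1 - (\<rho> s)\<^sup>2) / r s) \<longlongrightarrow> \<eta>0) (at_right 0)) \<and>
     (\<exists>s0. s0 \<in> ivl0 smax \<and>
        (\<exists>G. real_analytic_on G {-((r s0)\<^sup>2)<..<(r s0)\<^sup>2} \<and>
             (\<forall>v\<in>{-((r s0)\<^sup>2)<..<(r s0)\<^sup>2}. G v > 0) \<and>
             (\<forall>s\<in>{0<..<s0}. \<rho> s = G ((r s)\<^sup>2)))) \<and>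
     (\<exists>s0>0. ereal s0 \<le> smax \<and> (\<forall>s\<in>{0<..<s0}. deriv \<rho> s < 0 \<and> \<rho> s > 0))"

definition t_solution :: "real \<Rightarrow> (real \<Rightarrow> real) \<Rightarrow> (real \<Rightarrow> real) \<Rightarrow> (real \<Rightarrow> real) \<Rightarrow> real set \<Rightarrow> bool" where
  "t_solution \<beta> g \<eta> w J \<longleftrightarrow>
     (\<forall>t\<in>J. (\<eta> t, w t) \<in> N1 \<and>
        (\<eta> has_real_derivative eta_rhs \<beta> g (\<eta> t) (w t)) (at t) \<and>
        (w has_real_derivative 2 * w t) (at t))"

definition toy_t_tip_solution :: "real \<Rightarrow> (real \<Rightarrow> real) \<Rightarrow> (real \<Rightarrow> real) \<Rightarrow> (real \<Rightarrow> real) \<Rightarrow> real set \<Rightarrow> bool" where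
  "toy_t_tip_solution \<beta> g \<eta> w J \<longleftrightarrow>
     is_interval J \<and> open J \<and> J \<noteq> {} \<and> (\<forall>x. \<exists>t\<in>J. t < x) \<and>
     t_solution \<beta> g \<eta> w J \<and>
     (\<eta> \<longlongrightarrow> 1/3) at_bot \<and> (w \<longlongrightarrow> 0) at_bot \<and>
     (\<exists>t0\<in>J. \<exists>G. real_analytic_on G {-(w t0)<..<w t0} \<and>
        (\<forall>t\<in>J. t < t0 \<longrightarrow> \<eta> t = G (w t)))"

definition diffeo_onto_range :: "(real \<Rightarrow> real) \<Rightarrow> real set \<Rightarrow> bool" where
  "diffeo_onto_range f S \<longleftrightarrow>
     open (f ` S) \<and> inj_on f S \<and>
     (\<forall>x\<in>S. f differentiable (at x)) \<and> continuous_on S (deriv f) \<and>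
     (\<forall>y\<in>f ` S. the_inv_into S f differentiable (at y)) \<and>
     continuous_on (f ` S) (deriv (the_inv_into S f))"

end

theory Submission
  imports Defs "HOL-Complex_Analysis.Complex_Analysis"
begin


lemma ra_to_hol:
  assumes "real_analytic_on G S" "x \<in> S"
  shows "\<exists>e>0. \<exists>f. f holomorphic_on ball (complex_of_real x) e \<and>
           (\<forall>y. \<bar>y - x\<bar> < e \<longrightarrow> f (complex_of_real y) = complex_of_real (G y))"
proof -
  obtain e c where e: "e > 0" and c: "\<And>y. \<bar>y - x\<bar> < e \<Longrightarrow> (\<lambda>n. c n * (y - x) ^ n) sums G y"
    using assms unfolding real_analytic_on_def by blast
  define f where "f = (\<lambda>z. \<Sum>n. complex_of_real (c n) * z ^ n)"
  have summ: "summable (\<lambda>n. complex_of_real (c n) * z ^ n)" if "norm z < e" for z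
  proof -
    define y where "y = x + (norm z + e) / 2"
    have yx: "\<bar>y - x\<bar> < e \<and> norm z < \<bar>y - x\<bar>"
    proof -
      have "norm z \<ge> 0" by simp
      then have "norm z + e > 0" using e by linarith
      moreover have "y - x = (norm z + e) / 2" unfolding y_def by simp
      ultimately
      show ?thesis using that by simp
    qed
    then have "\<bar>y - x\<bar> < e" by simp
    then have "summable (\<lambda>n. c n * (y - x) ^ n)" by (rule sums_summable[OF c])
    then have "summable (\<lambda>n. complex_of_real (c n * (y - x) ^ n))"
      by (rule summable_of_real)
    then have "summable (\<lambda>n. complex_of_real (c n) * complex_of_real (y - x) ^ n)"
      by simp
    moreover have "norm z < norm (complex_of_real (y - x))"
      using yx by (simp only: norm_of_real)
    ultimately show ?thesis by (rule powser_inside)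
  qed
  have der: "f field_differentiable at z" if "norm z < e" for z
  proof -
    have "((\<lambda>z. \<Sum>n. complex_of_real (c n) * z ^ n) has_field_derivative
          (\<Sum>n. diffs (\<lambda>n. complex_of_real (c n)) n * z ^ n)) (at z)"
      by (rule termdiffs_strong'[where K=e]) (use summ that in blast)+
    then show ?thesis unfolding f_def field_differentiable_def by blast
  qed
  define h where "h = (\<lambda>z. f (z - complex_of_real x))"
  have "h holomorphic_on ball (complex_of_real x) e"
  proof -
    have "\<And>z. z \<in> ball (complex_of_real x) e \<Longrightarrow> h field_differentiable at z"
    proof -
      fix z assume z: "z \<in> ball (complex_of_real x) e"
      have "norm (z - complex_of_real x) < e" using z by (simp add: dist_norm norm_minus_commute)
      then have d1: "f field_differentiable at (z - complex_of_real x)" by (rule der)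
      have d2: "(\<lambda>z. z - complex_of_real x) field_differentiable at z"
        by (intro field_differentiable_diff field_differentiable_ident field_differentiable_const)
      have "(f \<circ> (\<lambda>z. z - complex_of_real x)) field_differentiable at z"
        using field_differentiable_compose[OF d2] d1 by simp
      then show "h field_differentiable at z" unfolding h_def o_def .
    qed
    then show ?thesis by (simp add: holomorphic_on_def field_differentiable_at_within)
  qed
  moreover have "h (complex_of_real y) = complex_of_real (G y)" if "\<bar>y - x\<bar> < e" for y
  proof -
    have "(\<lambda>n. complex_of_real (c n * (y - x) ^ n)) sums complex_of_real (G y)"
      using c[OF that] by (simp only: sums_of_real_iff)
    then have "(\<lambda>n. complex_of_real (c n) * (complex_of_real y - complex_of_real x) ^ n) sums complex_of_real (G y)"
      by (simp only: of_real_mult of_real_power of_real_diff)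
    then show ?thesis unfolding h_def f_def by (rule sums_unique[symmetric])
  qed
  ultimately show ?thesis using e by (intro exI[of _ e] exI[of _ h] conjI) auto
qed

lemma hol_to_ra:
  assumes "\<And>x. x \<in> S \<Longrightarrow> \<exists>e>0. \<exists>f. f holomorphic_on ball (complex_of_real x) e \<and>
           (\<forall>y. \<bar>y - x\<bar> < e \<longrightarrow> f (complex_of_real y) = complex_of_real (G y))"
  shows "real_analytic_on G S"
  unfolding real_analytic_on_def
proof
  fix x assume "x \<in> S"
  then obtain e f where e: "e > 0" and hol: "f holomorphic_on ball (complex_of_real x) e"
     and fy: "\<And>y. \<bar>y - x\<bar> < e \<Longrightarrow> f (complex_of_real y) = complex_of_real (G y)"
    using assms by blast
  define a where "a = (\<lambda>n. (deriv ^^ n) f (complex_of_real x) / fact n)"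
  have R: "(\<lambda>n. Re (a n) * (y - x) ^ n) sums G y" if "\<bar>y - x\<bar> < e" for y
  proof -
    have "complex_of_real y \<in> ball (complex_of_real x) e"
      using that by (simp add: dist_norm abs_minus_commute flip: of_real_diff)
    from holomorphic_power_series[OF hol this]
    have "(\<lambda>n. a n * (complex_of_real y - complex_of_real x) ^ n) sums f (complex_of_real y)"
      unfolding a_def .
    then have "(\<lambda>n. a n * complex_of_real ((y - x) ^ n)) sums complex_of_real (G y)"
      by (simp only: fy[OF that] of_real_diff of_real_power)
    from sums_Re[OF this] have "(\<lambda>n. Re (a n * complex_of_real ((y - x) ^ n))) sums G y" by simp
    moreover have "\<And>n. Re (a n * complex_of_real ((y - x) ^ n)) = Re (a n) * (y - x) ^ n"
      by simp
    ultimately show ?thesis by simp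
  qed
  have "\<forall>y. \<bar>y - x\<bar> < e \<longrightarrow> (\<lambda>n. Re (a n) * (y - x) ^ n) sums G y"
    using R by simp
  then have "\<exists>c. \<forall>y. \<bar>y - x\<bar> < e \<longrightarrow> (\<lambda>n. c n * (y - x) ^ n) sums G y"
    by (rule exI[of _ "\<lambda>n. Re (a n)"])
  then show "\<exists>e>0. \<exists>c. \<forall>y. \<bar>y - x\<bar> < e \<longrightarrow> (\<lambda>n. c n * (y - x) ^ n) sums G y"
    using e by blast
qed


definition hat :: "(real \<Rightarrow> real) \<Rightarrow> real \<Rightarrow> bool" where
  "hat G x \<longleftrightarrow> (\<exists>e>0. \<exists>f. f holomorphic_on ball (complex_of_real x) e \<and>
           (\<forall>y. \<bar>y - x\<bar> < e \<longrightarrow> f (complex_of_real y) = complex_of_real (G y)))"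

lemma ra_iff_hat: "real_analytic_on G S \<longleftrightarrow> (\<forall>x\<in>S. hat G x)"
proof
  assume "real_analytic_on G S" then show "\<forall>x\<in>S. hat G x"
    unfolding hat_def using ra_to_hol by blast
next
  assume "\<forall>x\<in>S. hat G x" then show "real_analytic_on G S"
    unfolding hat_def by (intro hol_to_ra) blast
qed

lemma hatE:
  assumes "hat G x"
  obtains e f where "e > 0" "f holomorphic_on ball (complex_of_real x) e"
    "\<And>y. \<bar>y - x\<bar> < e \<Longrightarrow> f (complex_of_real y) = complex_of_real (G y)"
proof -
  from assms obtain e f where "e > 0" "f holomorphic_on ball (complex_of_real x) e"
    "\<forall>y. \<bar>y - x\<bar> < e \<longrightarrow> f (complex_of_real y) = complex_of_real (G y)"
    unfolding hat_def by blast
  then show ?thesis using that by blast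
qed

lemma hatI:
  assumes "e > 0" "f holomorphic_on ball (complex_of_real x) e"
    "\<And>y. \<bar>y - x\<bar> < e \<Longrightarrow> f (complex_of_real y) = complex_of_real (G y)"
  shows "hat G x"
  unfolding hat_def
proof (intro exI[of _ e] conjI exI[of _ f])
  show "\<forall>y. \<bar>y - x\<bar> < e \<longrightarrow> f (complex_of_real y) = complex_of_real (G y)" using assms(3) by blast
qed (use assms in auto)

lemma hat_both:
  assumes "hat G x" "hat H x"
  obtains e f h where "e > 0" "f holomorphic_on ball (complex_of_real x) e"
    "h holomorphic_on ball (complex_of_real x) e"
    "\<And>y. \<bar>y - x\<bar> < e \<Longrightarrow> f (complex_of_real y) = complex_of_real (G y)"
    "\<And>y. \<bar>y - x\<bar> < e \<Longrightarrow> h (complex_of_real y) = complex_of_real (H y)"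
proof -
  obtain e1 f where e1: "e1 > 0" "f holomorphic_on ball (complex_of_real x) e1"
    "\<And>y. \<bar>y - x\<bar> < e1 \<Longrightarrow> f (complex_of_real y) = complex_of_real (G y)"
    using assms(1) by (rule hatE) blast
  obtain e2 h where e2: "e2 > 0" "h holomorphic_on ball (complex_of_real x) e2"
    "\<And>y. \<bar>y - x\<bar> < e2 \<Longrightarrow> h (complex_of_real y) = complex_of_real (H y)"
    using assms(2) by (rule hatE) blast
  show ?thesis
  proof (rule that[of "min e1 e2" f h])
    show "f holomorphic_on ball (complex_of_real x) (min e1 e2)"
      by (rule holomorphic_on_subset[OF e1(2)]) auto
    show "h holomorphic_on ball (complex_of_real x) (min e1 e2)"
      by (rule holomorphic_on_subset[OF e2(2)]) auto
  qed (use e1 e2 in auto)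
qed

lemma hat_const: "hat (\<lambda>_. c) x"
  by (rule hatI[of 1 "\<lambda>_. complex_of_real c"]) auto

lemma hat_id: "hat (\<lambda>v. v) x"
  by (rule hatI[of 1 "\<lambda>z. z"]) auto

lemma hat_add:
  assumes "hat G x" "hat H x" shows "hat (\<lambda>v. G v + H v) x"
proof -
  obtain e f h where *: "e > 0" "f holomorphic_on ball (complex_of_real x) e"
    "h holomorphic_on ball (complex_of_real x) e"
    "\<And>y. \<bar>y - x\<bar> < e \<Longrightarrow> f (complex_of_real y) = complex_of_real (G y)"
    "\<And>y. \<bar>y - x\<bar> < e \<Longrightarrow> h (complex_of_real y) = complex_of_real (H y)"
    using assms by (rule hat_both) blast
  show ?thesis
    by (rule hatI[of e "\<lambda>z. f z + h z"]) (use * in \<open>auto intro!: holomorphic_intros\<close>)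
qed

lemma hat_diff:
  assumes "hat G x" "hat H x" shows "hat (\<lambda>v. G v - H v) x"
proof -
  obtain e f h where *: "e > 0" "f holomorphic_on ball (complex_of_real x) e"
    "h holomorphic_on ball (complex_of_real x) e"
    "\<And>y. \<bar>y - x\<bar> < e \<Longrightarrow> f (complex_of_real y) = complex_of_real (G y)"
    "\<And>y. \<bar>y - x\<bar> < e \<Longrightarrow> h (complex_of_real y) = complex_of_real (H y)"
    using assms by (rule hat_both) blast
  show ?thesis
    by (rule hatI[of e "\<lambda>z. f z - h z"]) (use * in \<open>auto intro!: holomorphic_intros\<close>)
qed

lemma hat_mult:
  assumes "hat G x" "hat H x" shows "hat (\<lambda>v. G v * H v) x"
proof -
  obtain e f h where *: "e > 0" "f holomorphic_on ball (complex_of_real x) e"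
    "h holomorphic_on ball (complex_of_real x) e"
    "\<And>y. \<bar>y - x\<bar> < e \<Longrightarrow> f (complex_of_real y) = complex_of_real (G y)"
    "\<And>y. \<bar>y - x\<bar> < e \<Longrightarrow> h (complex_of_real y) = complex_of_real (H y)"
    using assms by (rule hat_both) blast
  show ?thesis
    by (rule hatI[of e "\<lambda>z. f z * h z"]) (use * in \<open>auto intro!: holomorphic_intros\<close>)
qed

lemma hat_cong:
  assumes "hat G x" "d > 0" "\<And>y. \<bar>y - x\<bar> < d \<Longrightarrow> G y = H y"
  shows "hat H x"
proof -
  obtain e f where *: "e > 0" "f holomorphic_on ball (complex_of_real x) e"
    "\<And>y. \<bar>y - x\<bar> < e \<Longrightarrow> f (complex_of_real y) = complex_of_real (G y)"
    using assms(1) by (rule hatE) blast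
  show ?thesis
  proof (rule hatI[of "min e d" f])
    show "f holomorphic_on ball (complex_of_real x) (min e d)"
      by (rule holomorphic_on_subset[OF *(2)]) auto
  qed (use * assms in auto)
qed

lemma hat_cont:
  assumes "hat G x" shows "isCont G x"
proof -
  obtain e f where *: "e > 0" "f holomorphic_on ball (complex_of_real x) e"
    "\<And>y. \<bar>y - x\<bar> < e \<Longrightarrow> f (complex_of_real y) = complex_of_real (G y)"
    using assms(1) by (rule hatE) blast
  have fc: "isCont f (complex_of_real x)"
    using *(1,2) holomorphic_on_imp_continuous_on continuous_on_interior[of "ball (complex_of_real x) e" f]
    by (simp add: interior_open)
  have "isCont (\<lambda>y. f (complex_of_real y)) x"
    using continuous_at_compose[of x complex_of_real f] fc by (simp add: o_def)
  then have c: "isCont (\<lambda>y. Re (f (complex_of_real y))) x"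
    by (rule isCont_Re)
  have "eventually (\<lambda>y. Re (f (complex_of_real y)) = G y) (nhds x)"
    unfolding eventually_nhds_metric using *(1,3)
    by (intro exI[of _ e] conjI) (auto simp: dist_real_def)
  then show ?thesis using c by (simp only: isCont_cong)
qed

lemma hat_sqrt:
  assumes "hat G x" "G x > 0" shows "hat (\<lambda>v. sqrt (G v)) x"
proof -
  obtain e f where *: "e > 0" "f holomorphic_on ball (complex_of_real x) e"
    "\<And>y. \<bar>y - x\<bar> < e \<Longrightarrow> f (complex_of_real y) = complex_of_real (G y)"
    using assms(1) by (rule hatE) blast
  have "isCont f (complex_of_real x)"
    using *(1,2) holomorphic_on_imp_continuous_on continuous_on_interior[of "ball (complex_of_real x) e" f]
    by (simp add: interior_open)
  moreover have fx: "f (complex_of_real x) = complex_of_real (G x)" using *(1,3) by simp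
  ultimately obtain d where d: "d > 0" "\<And>z. dist z (complex_of_real x) < d \<Longrightarrow> dist (f z) (complex_of_real (G x)) < G x"
    using assms(2) unfolding continuous_at_eps_delta by metis
  define e' where "e' = min e d"
  have e': "e' > 0" using * d unfolding e'_def by auto
  have pos: "Re (f z) > 0" if "z \<in> ball (complex_of_real x) e'" for z
  proof -
    have "dist (f z) (complex_of_real (G x)) < G x"
      using that d unfolding e'_def by (auto simp: dist_commute)
    moreover have "G x - Re (f z) \<le> dist (f z) (complex_of_real (G x))"
      using abs_Re_le_cmod[of "f z - complex_of_real (G x)"] by (simp add: dist_norm)
    ultimately show ?thesis by linarith
  qed
  have hol: "f holomorphic_on ball (complex_of_real x) e'"
    by (rule holomorphic_on_subset[OF *(2)]) (auto simp: e'_def)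
  show ?thesis
  proof (rule hatI[of e' "\<lambda>z. csqrt (f z)"])
    show "(\<lambda>z. csqrt (f z)) holomorphic_on ball (complex_of_real x) e'"
    proof (rule holomorphic_on_csqrt'[OF hol])
      fix z assume "z \<in> ball (complex_of_real x) e'"
      then have "Re (f z) > 0" by (rule pos)
      then show "f z \<notin> \<real>\<^sub>\<le>\<^sub>0" by (auto simp: nonpos_Reals_def Reals_def)
    qed
  next
    fix y assume y: "\<bar>y - x\<bar> < e'"
    then have "complex_of_real y \<in> ball (complex_of_real x) e'"
      by (simp add: dist_norm abs_minus_commute flip: of_real_diff)
    then have "Re (f (complex_of_real y)) > 0" by (rule pos)
    moreover have fy: "f (complex_of_real y) = complex_of_real (G y)" using *(3) y unfolding e'_def by auto
    ultimately have "G y \<ge> 0" by simp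
    then show "csqrt (f (complex_of_real y)) = complex_of_real (sqrt (G y))"
      using fy csqrt_of_real by simp
  qed (use e' in auto)
qed

lemma hat_divide:
  assumes "hat G x" "hat H x" "H x \<noteq> 0" shows "hat (\<lambda>v. G v / H v) x"
proof -
  obtain e f h where *: "e > 0" "f holomorphic_on ball (complex_of_real x) e"
    "h holomorphic_on ball (complex_of_real x) e"
    "\<And>y. \<bar>y - x\<bar> < e \<Longrightarrow> f (complex_of_real y) = complex_of_real (G y)"
    "\<And>y. \<bar>y - x\<bar> < e \<Longrightarrow> h (complex_of_real y) = complex_of_real (H y)"
    using assms(1,2) by (rule hat_both) blast
  have "isCont h (complex_of_real x)"
    using *(1,3) holomorphic_on_imp_continuous_on continuous_on_interior[of "ball (complex_of_real x) e" h]
    by (simp add: interior_open)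
  moreover have hx: "h (complex_of_real x) = complex_of_real (H x)" using *(1,5) by simp
  ultimately obtain d where d: "d > 0" "\<And>z. dist z (complex_of_real x) < d \<Longrightarrow> dist (h z) (complex_of_real (H x)) < \<bar>H x\<bar>"
    using assms(3) unfolding continuous_at_eps_delta by (metis zero_less_abs_iff)
  define e' where "e' = min e d"
  have e': "e' > 0" using * d unfolding e'_def by auto
  have nz: "h z \<noteq> 0" if "z \<in> ball (complex_of_real x) e'" for z
  proof
    assume "h z = 0"
    moreover have "dist (h z) (complex_of_real (H x)) < \<bar>H x\<bar>"
      using that d unfolding e'_def by (auto simp: dist_commute)
    ultimately show False by (simp add: dist_norm)
  qed
  show ?thesis
  proof (rule hatI[of e' "\<lambda>z. f z / h z"])
    have sub: "ball (complex_of_real x) e' \<subseteq> ball (complex_of_real x) e" by (auto simp: e'_def)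
    show "(\<lambda>z. f z / h z) holomorphic_on ball (complex_of_real x) e'"
      using nz holomorphic_on_subset[OF *(2) sub] holomorphic_on_subset[OF *(3) sub]
      by (intro holomorphic_on_divide) auto
  qed (use e' * in \<open>auto simp: e'_def\<close>)
qed


lemma ra_div_v:
  assumes "real_analytic_on F S" "0 \<in> S" "F 0 = 0"
  shows "\<exists>H. real_analytic_on H S \<and> (\<forall>v\<in>S. v \<noteq> 0 \<longrightarrow> H v = F v / v)"
proof -
  obtain e c where e: "e > 0" and c: "\<And>y. \<bar>y - 0\<bar> < e \<Longrightarrow> (\<lambda>n. c n * (y - 0) ^ n) sums F y"
    using assms(1,2) unfolding real_analytic_on_def by blast
  have c': "(\<lambda>n. c n * y ^ n) sums F y" if "\<bar>y\<bar> < e" for y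
    using c[of y] that by simp
  have "(\<lambda>n. c n * 0 ^ n) sums F 0" using c'[of 0] e by simp
  then have c0: "c 0 = 0" using assms(3) by simp
  define H where "H = (\<lambda>v. if v = 0 then c 1 else F v / v)"
  have H0: "hat H 0"
  proof -
    have "real_analytic_on H {0}"
      unfolding real_analytic_on_def
    proof (intro ballI exI[of _ e] conjI exI[of _ "\<lambda>n. c (Suc n)"] allI impI)
      fix x y assume "x \<in> {0::real}" and y: "\<bar>y - x\<bar> < e"
      then have y': "\<bar>y\<bar> < e" by simp
      show "(\<lambda>n. c (Suc n) * (y - x) ^ n) sums H y"
      proof (cases "y = 0")
        case True
        then show ?thesis using \<open>x \<in> {0}\<close> powser_sums_zero[of "\<lambda>n. c (Suc n)"] by (simp add: H_def)
      next
        case False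
        have "(\<lambda>n. c (Suc n) * y ^ (Suc n)) sums F y"
          using c'[OF y'] c0 by (subst sums_Suc_iff) simp
        then have "(\<lambda>n. c (Suc n) * y ^ (Suc n) / y) sums (F y / y)"
          by (rule sums_divide)
        moreover have "\<And>n. c (Suc n) * y ^ (Suc n) / y = c (Suc n) * y ^ n"
          using False by simp
        ultimately show ?thesis using False \<open>x \<in> {0}\<close> by (simp add: H_def)
      qed
    qed (use e in auto)
    then show ?thesis by (simp add: ra_iff_hat)
  qed
  have "hat H x" if "x \<in> S" for x
  proof (cases "x = 0")
    case True then show ?thesis using H0 by simp
  next
    case False
    have "hat F x" using assms(1) that by (simp add: ra_iff_hat)
    then have "hat (\<lambda>v. F v / v) x" using False by (intro hat_divide hat_id)
    then show ?thesis
      by (rule hat_cong[of _ _ "\<bar>x\<bar>"]) (use False in \<open>auto simp: H_def\<close>)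
  qed
  then have "real_analytic_on H S" by (simp add: ra_iff_hat)
  then show ?thesis by (intro exI[of _ H]) (auto simp: H_def)
qed

lemma ra_subset: "real_analytic_on G S \<Longrightarrow> T \<subseteq> S \<Longrightarrow> real_analytic_on G T"
  unfolding real_analytic_on_def by blast

lemma ra_cont: "real_analytic_on G S \<Longrightarrow> x \<in> S \<Longrightarrow> isCont G x"
  by (simp add: ra_iff_hat hat_cont)




lemma interval_closed_sub:
  fixes S :: "real set"
  assumes "is_interval S" "a \<in> S" "b \<in> S"
  shows "{a..b} \<subseteq> S"
  using assms unfolding is_interval_1 by (meson atLeastAtMost_iff subsetI)

lemma open_cball_sub:
  fixes S :: "real set"
  assumes "open S" "x \<in> S"
  obtains d where "d > 0" "{x - d..x + d} \<subseteq> S"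
proof -
  obtain e where e: "e > 0" "ball x e \<subseteq> S" using assms open_contains_ball by blast
  have "{x - e/2..x + e/2} \<subseteq> ball x e" using e(1) by (auto simp: dist_real_def)
  then show ?thesis using that[of "e/2"] e by auto
qed

lemma diffeo_gen:
  fixes f f' :: "real \<Rightarrow> real" and S :: "real set"
  assumes S: "is_interval S" "open S"
    and der: "\<And>x. x \<in> S \<Longrightarrow> (f has_real_derivative f' x) (at x)"
    and pos: "\<And>x. x \<in> S \<Longrightarrow> f' x > 0"
    and cont: "continuous_on S f'"
  shows diffeo_mono: "\<And>x y. x \<in> S \<Longrightarrow> y \<in> S \<Longrightarrow> x < y \<Longrightarrow> f x < f y"
    and diffeo_inj: "inj_on f S"
    and diffeo_open: "open (f ` S)"
    and diffeo_interval: "is_interval (f ` S)"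
    and diffeo_invder: "\<And>y. y \<in> f ` S \<Longrightarrow> (the_inv_into S f has_real_derivative inverse (f' (the_inv_into S f y))) (at y)"
    and diffeo_invcont: "continuous_on (f ` S) (the_inv_into S f)"
    and diffeo_diffeo: "diffeo_onto_range f S"
proof -
  have fc: "isCont f x" if "x \<in> S" for x using der[OF that] DERIV_isCont by blast
  have mono: "f x < f y" if "x \<in> S" "y \<in> S" "x < y" for x y
  proof (rule DERIV_pos_imp_increasing[OF that(3)])
    fix z assume "x \<le> z" "z \<le> y"
    then have "z \<in> S" using interval_closed_sub[OF S(1) that(1,2)] by auto
    then show "\<exists>D. (f has_real_derivative D) (at z) \<and> 0 < D" using der pos by blast
  qed
  then show "\<And>x y. x \<in> S \<Longrightarrow> y \<in> S \<Longrightarrow> x < y \<Longrightarrow> f x < f y" by blast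
  show inj: "inj_on f S"
  proof (rule inj_onI)
    fix x y assume "x \<in> S" "y \<in> S" "f x = f y"
    then show "x = y" using mono[of x y] mono[of y x] by (cases x y rule: linorder_cases) auto
  qed
  have between: "v \<in> f ` S" if ab0: "a \<in> S" "b \<in> S" "f a \<le> v" "v \<le> f b" for a b v
  proof -
    have ab: "a \<le> b" using ab0 mono[of b a] by force
    have "continuous_on {a..b} f"
      using interval_closed_sub[OF S(1) ab0(1,2)] fc by (intro continuous_at_imp_continuous_on) auto
    then have "\<exists>x. a \<le> x \<and> x \<le> b \<and> f x = v" using IVT'[of f a v b] ab0 ab by auto
    then obtain x where "a \<le> x" "x \<le> b" "f x = v" by blast
    then show ?thesis using interval_closed_sub[OF S(1) ab0(1,2)] by force
  qed
  have loc: "\<exists>d>0. {x - d..x + d} \<subseteq> S" if "x \<in> S" for x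
    using open_cball_sub[OF S(2) that] by metis
  show "open (f ` S)"
    unfolding open_contains_ball
  proof
    fix y assume "y \<in> f ` S"
    then obtain x where x: "x \<in> S" "y = f x" by auto
    then obtain d where d: "d > 0" "{x - d..x + d} \<subseteq> S" using loc by blast
    have xm: "x - d \<in> S" "x + d \<in> S" using d by auto
    have l: "f (x - d) < y" "y < f (x + d)" using mono[OF xm(1) x(1)] mono[OF x(1) xm(2)] d x by auto
    define e where "e = min (y - f (x - d)) (f (x + d) - y)"
    have "e > 0" using l unfolding e_def by auto
    moreover have "ball y e \<subseteq> f ` S"
    proof
      fix v assume "v \<in> ball y e"
      then have "f (x - d) \<le> v" "v \<le> f (x + d)" unfolding e_def by (auto simp: dist_real_def)
      then show "v \<in> f ` S" using between[OF xm] by blast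
    qed
    ultimately show "\<exists>e>0. ball y e \<subseteq> f ` S" by blast
  qed
  have conn: "connected (f ` S)"
    using S(1) fc by (intro connected_continuous_image continuous_at_imp_continuous_on)
      (auto simp: is_interval_connected)
  then show "is_interval (f ` S)" by (simp add: is_interval_connected_1)
  define g where "g = the_inv_into S f"
  have gf: "g (f z) = z" if "z \<in> S" for z using the_inv_into_f_f[OF inj that] unfolding g_def .
  have fg: "f (g y) = y" if "y \<in> f ` S" for y using f_the_inv_into_f[OF inj that] unfolding g_def .
  have gS: "g y \<in> S" if "y \<in> f ` S" for y using the_inv_into_into[OF inj that] unfolding g_def by blast
  have gcont: "isCont g y" if yS: "y \<in> f ` S" for y
  proof -
    obtain x where x: "x \<in> S" "y = f x" using yS by auto
    then obtain d where d: "d > 0" "{x - d..x + d} \<subseteq> S" using loc by blast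
    have "isCont g (f x)"
    proof (rule isCont_inverse_function[where f=f and g=g and x=x, OF d(1)])
      fix z assume "\<bar>z - x\<bar> \<le> d"
      then have "z \<in> {x - d..x + d}" by (auto simp: abs_le_iff)
      then have "z \<in> S" using d by blast
      then show "g (f z) = z" using gf by auto
    next
      fix z assume "\<bar>z - x\<bar> \<le> d"
      then have "z \<in> {x - d..x + d}" by (auto simp: abs_le_iff)
      then have "z \<in> S" using d by blast
      then show "isCont f z" using fc by auto
    qed
    then show ?thesis using x by simp
  qed
  show gc: "continuous_on (f ` S) (the_inv_into S f)"
    using gcont unfolding g_def by (intro continuous_at_imp_continuous_on) auto
  have gder: "(g has_real_derivative inverse (f' (g y))) (at y)" if yS: "y \<in> f ` S" for y
  proof -
    obtain x where x: "x \<in> S" "y = f x" using yS by auto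
    then obtain d where d: "d > 0" "{x - d..x + d} \<subseteq> S" using loc by blast
    have xm: "x - d \<in> S" "x + d \<in> S" using d by auto
    have l: "f (x - d) < y" "y < f (x + d)" using mono[OF xm(1) x(1)] mono[OF x(1) xm(2)] d x by auto
    show ?thesis
    proof (rule DERIV_inverse_function[OF _ _ l])
      show "(f has_real_derivative f' (g y)) (at (g y))" using der gS[OF yS] by blast
      show "f' (g y) \<noteq> 0" using pos gS[OF yS] by force
      show "isCont g y" using gcont[OF yS] .
      fix v assume "f (x - d) < v" "v < f (x + d)"
      then have "v \<in> f ` S" using between[OF xm] by auto
      then show "f (g v) = v" by (rule fg)
    qed
  qed
  then show "\<And>y. y \<in> f ` S \<Longrightarrow> (the_inv_into S f has_real_derivative inverse (f' (the_inv_into S f y))) (at y)"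
    unfolding g_def by blast
  show "diffeo_onto_range f S"
    unfolding diffeo_onto_range_def
  proof (intro conjI ballI)
    show "open (f ` S)" by fact
    show "inj_on f S" by fact
    show "f differentiable at x" if "x \<in> S" for x
      using der[OF that] real_differentiable_def by blast
    show "continuous_on S (deriv f)"
      using cont by (rule continuous_on_cong[THEN iffD1, rotated 2]) (auto intro!: DERIV_imp_deriv[symmetric] der)
    show "the_inv_into S f differentiable at y" if "y \<in> f ` S" for y
      using gder[OF that] real_differentiable_def unfolding g_def by blast
    have "continuous_on (f ` S) (\<lambda>y. inverse (f' (g y)))"
    proof (intro continuous_on_inverse continuous_on_compose2[OF cont])
      show "continuous_on (f ` S) g" using gc unfolding g_def .
      show "g ` f ` S \<subseteq> S" using gS by auto
      show "\<forall>y\<in>f ` S. f' (g y) \<noteq> 0" using pos gS by force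
    qed
    then show "continuous_on (f ` S) (deriv (the_inv_into S f))"
      by (rule continuous_on_cong[THEN iffD1, rotated 2]) (use gder in \<open>auto intro!: DERIV_imp_deriv[symmetric] simp: g_def\<close>)
  qed
qed




lemma ivl0_interval: "is_interval (ivl0 smax)"
  unfolding is_interval_1 ivl0_def
  by (metis (mono_tags, lifting) ereal_less_eq(3) le_less_trans less_le_trans mem_Collect_eq)

lemma ivl0_open: "open (ivl0 smax)"
proof (cases smax)
  case (real a)
  then have "ivl0 smax = {0<..<a}" unfolding ivl0_def by auto
  then show ?thesis by simp
next
  case PInf
  then have "ivl0 smax = {0<..}" unfolding ivl0_def by auto
  then show ?thesis by simp
next
  case MInf
  then have "ivl0 smax = {}" unfolding ivl0_def by auto
  then show ?thesis by simp
qed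

lemma ivl0_down: "x \<in> ivl0 smax \<Longrightarrow> 0 < y \<Longrightarrow> y \<le> x \<Longrightarrow> y \<in> ivl0 smax"
  unfolding ivl0_def by (metis ereal_less_eq(3) le_less_trans mem_Collect_eq)

lemma ivl0_mono: "a \<le> b \<Longrightarrow> ivl0 a \<subseteq> ivl0 b"
  unfolding ivl0_def by (auto intro: less_le_trans)

lemma eventually_ivl0:
  assumes "x \<in> ivl0 smax" shows "eventually (\<lambda>s. s \<in> ivl0 smax) (at_right 0)"
  unfolding eventually_at_right_field
  using assms ivl0_down by (intro exI[of _ x]) (auto simp: ivl0_def)

lemma limit_fixpoint:
  fixes \<eta> w g :: "real \<Rightarrow> real"
  assumes lim: "(\<eta> \<longlongrightarrow> \<eta>0) at_bot" "(w \<longlongrightarrow> 0) at_bot" and gc: "isCont g 0"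
    and der: "eventually (\<lambda>t. (\<eta> has_real_derivative eta_rhs \<beta> g (\<eta> t) (w t)) (at t)) at_bot"
    and pos: "\<eta>0 > 0"
  shows "\<eta>0 = 1/3"
proof -
  define L where "L = \<eta>0 / 2 * (1 - 3 * \<eta>0 * sqrt (1 - \<eta>0\<^sup>2 * 0)) - 3/2 * \<beta> * \<eta>0\<^sup>2 * 0 * g 0"
  have gl: "((\<lambda>t. g (w t)) \<longlongrightarrow> g 0) at_bot" using isCont_tendsto_compose[OF gc lim(2)] .
  have E: "((\<lambda>t. eta_rhs \<beta> g (\<eta> t) (w t)) \<longlongrightarrow> L) at_bot"
    unfolding eta_rhs_def L_def
    by (intro tendsto_intros lim gl tendsto_real_sqrt) auto
  have "L = 0"
  proof (rule ccontr)
    assume L: "L \<noteq> 0"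
    then have L2: "\<bar>L\<bar> / 2 > 0" "\<bar>L\<bar> / 4 > 0" by auto
    have e1: "eventually (\<lambda>t. dist (eta_rhs \<beta> g (\<eta> t) (w t)) L < \<bar>L\<bar> / 2) at_bot"
      using E L2(1) tendstoD by blast
    have e2: "eventually (\<lambda>t. dist (\<eta> t) \<eta>0 < \<bar>L\<bar> / 4) at_bot"
      using lim(1) L2(2) tendstoD by blast
    obtain N where N: "\<And>t. t \<le> N \<Longrightarrow> dist (eta_rhs \<beta> g (\<eta> t) (w t)) L < \<bar>L\<bar> / 2 \<and>
        dist (\<eta> t) \<eta>0 < \<bar>L\<bar> / 4 \<and> (\<eta> has_real_derivative eta_rhs \<beta> g (\<eta> t) (w t)) (at t)"
      using eventually_conj[OF e1 eventually_conj[OF e2 der]] unfolding eventually_at_bot_linorder by blast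
    obtain z where z: "N - 1 < z" "z < N" "\<eta> N - \<eta> (N - 1) = (N - (N - 1)) * eta_rhs \<beta> g (\<eta> z) (w z)"
      using MVT2[of "N - 1" N \<eta> "\<lambda>t. eta_rhs \<beta> g (\<eta> t) (w t)"] N by auto
    have "dist (eta_rhs \<beta> g (\<eta> z) (w z)) L < \<bar>L\<bar> / 2" using N[of z] z by auto
    then have a: "\<bar>eta_rhs \<beta> g (\<eta> z) (w z)\<bar> > \<bar>L\<bar> / 2" unfolding dist_real_def by arith
    have "dist (\<eta> N) \<eta>0 < \<bar>L\<bar> / 4" "dist (\<eta> (N - 1)) \<eta>0 < \<bar>L\<bar> / 4" using N[of N] N[of "N - 1"] by auto
    then have "\<bar>\<eta> N - \<eta> (N - 1)\<bar> < \<bar>L\<bar> / 2" unfolding dist_real_def by arith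
    then show False using a z(3) by simp
  qed
  then have "\<eta>0 * (1 - 3 * \<eta>0) = 0" unfolding L_def by simp
  then show ?thesis using pos by simp
qed


lemma tau_to_minus_inf:
  fixes \<tau> \<rho> r :: "real \<Rightarrow> real" and S :: "real set"
  assumes s1: "s1 > 0" and inS: "\<And>s. 0 < s \<Longrightarrow> s \<le> s1 \<Longrightarrow> s \<in> S"
    and tder: "\<And>s. s \<in> S \<Longrightarrow> (\<tau> has_real_derivative \<rho> s / r s) (at s)"
    and rder: "\<And>s. s \<in> S \<Longrightarrow> (r has_real_derivative \<rho> s) (at s)"
    and bnd: "\<And>s. s \<in> S \<Longrightarrow> 0 < \<rho> s \<and> \<rho> s < 1 \<and> 0 < r s"
    and lims: "(\<rho> \<longlongrightarrow> 1) (at_right 0)" "(r \<longlongrightarrow> 0) (at_right 0)"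
  shows "filterlim \<tau> at_bot (at_right 0)"
proof -
  have rle: "r s \<le> s" if s: "0 < s" "s \<le> s1" for s
  proof (rule ccontr)
    assume "\<not> r s \<le> s"
    then have "r s - s > 0" by simp
    then have "eventually (\<lambda>e. r e < r s - s) (at_right 0)" using order_tendstoD(2)[OF lims(2)] by blast
    then obtain b where b: "b > 0" "\<And>e. 0 < e \<Longrightarrow> e < b \<Longrightarrow> r e < r s - s"
      unfolding eventually_at_right_field by blast
    define e where "e = min (b/2) (s/2)"
    have e: "0 < e" "e < b" "e < s" using b s unfolding e_def by auto
    obtain z where z: "e < z" "z < s" "r s - r e = (s - e) * \<rho> z"
      using MVT2[of e s r \<rho>] e rder inS s by force
    have "\<rho> z < 1" using bnd[OF inS[of z]] z e s by auto
    then have "(s - e) * \<rho> z < s - e" using e by simp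
    then show False using z(3) b(2)[OF e(1,2)] e by linarith
  qed
  have "eventually (\<lambda>s. \<rho> s > 1/2) (at_right 0)" using order_tendstoD(1)[OF lims(1), of "1/2"] by simp
  then obtain \<delta> where \<delta>: "\<delta> > 0" "\<And>s. 0 < s \<Longrightarrow> s < \<delta> \<Longrightarrow> \<rho> s > 1/2"
    unfolding eventually_at_right_field by blast
  define d where "d = min (\<delta>/2) s1"
  have d: "0 < d" "d \<le> s1" "d < \<delta>" using \<delta> s1 unfolding d_def by auto
  define C where "C = \<tau> d - ln d / 2"
  have bound: "\<tau> s \<le> C + ln s / 2" if s: "0 < s" "s \<le> d" for s
  proof -
    have "\<tau> s - ln s / 2 \<le> \<tau> d - ln d / 2"
    proof (rule DERIV_nonneg_imp_nondecreasing[OF s(2)])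
      fix u assume u: "s \<le> u" "u \<le> d"
      then have u0: "0 < u" "u \<le> s1" "u < \<delta>" using s d by auto
      have uS: "u \<in> S" using inS u0 by auto
      have D: "((\<lambda>u. \<tau> u - ln u / 2) has_real_derivative \<rho> u / r u - 1 / u / 2) (at u)"
      proof -
        have "(ln has_real_derivative 1 / u) (at u)" using u0(1) by (rule DERIV_ln_divide)
        then have "((\<lambda>u. ln u / 2) has_real_derivative 1 / u / 2) (at u)" by (rule DERIV_cdivide)
        then show ?thesis using tder[OF uS] by (intro DERIV_diff)
      qed
      have ru: "0 < r u" "r u \<le> u" using bnd[OF uS] rle u0 by auto
      have rho: "\<rho> u > 1/2" using \<delta>(2) u0 by auto
      have "1 / u / 2 \<le> (1/2) / r u" using ru by (simp add: field_simps)
      also have "\<dots> \<le> \<rho> u / r u" using ru rho by (intro divide_right_mono) auto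
      finally have "\<rho> u / r u - 1 / u / 2 \<ge> 0" by simp
      then show "\<exists>y. ((\<lambda>u. \<tau> u - ln u / 2) has_real_derivative y) (at u) \<and> 0 \<le> y"
        using D by blast
    qed
    then show ?thesis unfolding C_def by simp
  qed
  show ?thesis
  proof (rule filterlim_at_bot[THEN iffD2], intro allI)
    fix Z :: real
    define b where "b = min d (exp (2 * (Z - C)))"
    have b: "b > 0" using d unfolding b_def by auto
    show "eventually (\<lambda>s. \<tau> s \<le> Z) (at_right 0)"
      unfolding eventually_at_right_field
    proof (intro exI[of _ b] conjI allI impI)
      fix s :: real assume s: "0 < s" "s < b"
      then have "s < exp (2 * (Z - C))" "s \<le> d" unfolding b_def by auto
      then have "ln s < 2 * (Z - C)" using s(1) by (metis ln_exp ln_less_cancel_iff exp_gt_zero)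
      then have "ln s / 2 < Z - C" by simp
      then show "\<tau> s \<le> Z" using bound[OF s(1) \<open>s \<le> d\<close>] by linarith
    qed (use b in auto)
  qed
qed


lemma unb_down:
  fixes J :: "real set"
  assumes "is_interval J" "\<forall>x. \<exists>t\<in>J. t < x" "t \<in> J" "u \<le> t"
  shows "u \<in> J"
proof -
  obtain v where "v \<in> J" "v < u" using assms(2) by blast
  then show ?thesis using assms(1,3,4) unfolding is_interval_1 by (meson less_imp_le)
qed

lemma mono_on_interval:
  fixes f f' :: "real \<Rightarrow> real"
  assumes "is_interval J" "\<And>t. t \<in> J \<Longrightarrow> (f has_real_derivative f' t) (at t)"
    "\<And>t. t \<in> J \<Longrightarrow> f' t > 0" "x \<in> J" "y \<in> J" "x < y"
  shows "f x < f y"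
proof (rule DERIV_pos_imp_increasing[OF assms(6)])
  fix z assume "x \<le> z" "z \<le> y"
  then have "z \<in> J" using assms(1,4,5) unfolding is_interval_1 by blast
  then show "\<exists>D. (f has_real_derivative D) (at z) \<and> 0 < D" using assms(2,3) by blast
qed

lemma sigma_limit:
  fixes \<sigma> rh \<rho>h :: "real \<Rightarrow> real" and J :: "real set"
  assumes J: "is_interval J" "\<forall>x. \<exists>t\<in>J. t < x"
   and sder: "\<And>t. t \<in> J \<Longrightarrow> (\<sigma> has_real_derivative rh t / \<rho>h t) (at t)"
   and rder: "\<And>t. t \<in> J \<Longrightarrow> (rh has_real_derivative rh t) (at t)"
   and pos: "\<And>t. t \<in> J \<Longrightarrow> rh t > 0 \<and> \<rho>h t > 0"
   and ev: "eventually (\<lambda>t. \<rho>h t > 1/2) at_bot"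
  shows "\<exists>s0. (\<sigma> \<longlongrightarrow> s0) at_bot \<and> (\<forall>t\<in>J. s0 < \<sigma> t)"
proof -
  have down: "u \<in> J" if "t \<in> J" "u \<le> t" for t u using unb_down[OF J that] .
  have mono: "\<sigma> x < \<sigma> y" if "x \<in> J" "y \<in> J" "x < y" for x y
    by (rule mono_on_interval[OF J(1) sder _ that]) (use pos in auto)
  obtain T0 where T0: "\<And>t. t \<le> T0 \<Longrightarrow> \<rho>h t > 1/2" using ev unfolding eventually_at_bot_linorder by blast
  obtain T where T: "T \<in> J" "T < T0" using J(2) by blast
  have lower: "\<sigma> T - 2 * rh T \<le> \<sigma> t" if t: "t \<le> T" for t
  proof -
    have "\<sigma> t - 2 * rh t \<ge> \<sigma> T - 2 * rh T"
    proof (rule DERIV_nonpos_imp_nonincreasing[OF t])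
      fix u assume u: "t \<le> u" "u \<le> T"
      then have uJ: "u \<in> J" using down[OF T(1)] by auto
      have D: "((\<lambda>u. \<sigma> u - 2 * rh u) has_real_derivative rh u / \<rho>h u - 2 * rh u) (at u)"
        using DERIV_diff[OF sder[OF uJ] DERIV_cmult[OF rder[OF uJ], of 2]] by simp
      have p: "rh u > 0" "\<rho>h u > 1/2" using pos[OF uJ] T0[of u] u T by auto
      then have "rh u / \<rho>h u \<le> rh u / (1/2)" by (intro divide_left_mono) auto
      then have "rh u / \<rho>h u - 2 * rh u \<le> 0" by simp
      then show "\<exists>y. ((\<lambda>u. \<sigma> u - 2 * rh u) has_real_derivative y) (at u) \<and> y \<le> 0"
        using D by blast
    qed
    moreover have "rh t > 0" using pos down[OF T(1) t] by auto
    ultimately show ?thesis by linarith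
  qed
  define L where "L = Inf (\<sigma> ` {..T})"
  have bdd: "bdd_below (\<sigma> ` {..T})" using lower by (intro bdd_belowI[of _ "\<sigma> T - 2 * rh T"]) auto
  have Lle: "L \<le> \<sigma> t" if "t \<le> T" for t unfolding L_def using bdd that by (intro cInf_lower) auto
  have lim: "(\<sigma> \<longlongrightarrow> L) at_bot"
  proof (rule order_tendstoI)
    fix a assume "a < L"
    then show "eventually (\<lambda>t. a < \<sigma> t) at_bot"
      unfolding eventually_at_bot_linorder using Lle by (intro exI[of _ T]) (auto intro: less_le_trans)
  next
    fix a assume "L < a"
    then obtain x where x: "x \<in> \<sigma> ` {..T}" "x < a"
      unfolding L_def using cInf_lessD[of "\<sigma> ` {..T}" a] by auto
    then obtain t1 where t1: "t1 \<le> T" "\<sigma> t1 < a" by auto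
    have t1J: "t1 \<in> J" using down[OF T(1) t1(1)] .
    show "eventually (\<lambda>t. \<sigma> t < a) at_bot"
      unfolding eventually_at_bot_linorder
    proof (intro exI[of _ t1] allI impI)
      fix t assume "t \<le> t1"
      then have "\<sigma> t \<le> \<sigma> t1"
        using mono[of t t1] down[OF t1J] by (cases "t = t1") auto
      then show "\<sigma> t < a" using t1 by simp
    qed
  qed
  have "L < \<sigma> t" if tJ: "t \<in> J" for t
  proof -
    have t1: "t - 1 \<in> J" using down[OF tJ] by simp
    have "L \<le> \<sigma> (t - 1)"
    proof (cases "t - 1 \<le> T")
      case True then show ?thesis by (rule Lle)
    next
      case False then show ?thesis using mono[OF T(1) t1] Lle[of T] by simp
    qed
    also have "\<sigma> (t - 1) < \<sigma> t" using mono[OF t1 tJ] by simp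
    finally show ?thesis .
  qed
  then show ?thesis using lim by blast
qed

lemma ra_sqrt_near0:
  assumes "real_analytic_on H {-a<..<a}" "a > 0" "H 0 > 0"
  shows "\<exists>b>0. b \<le> a \<and> (\<forall>v\<in>{-b<..<b}. H v > 0) \<and> real_analytic_on (\<lambda>v. sqrt (H v)) {-b<..<b}"
proof -
  have "isCont H 0" using ra_cont[OF assms(1)] assms(2) by simp
  then obtain d where d: "d > 0" "\<And>v. dist v 0 < d \<Longrightarrow> dist (H v) (H 0) < H 0"
    using assms(3) unfolding continuous_at_eps_delta by metis
  define b where "b = min a d"
  have b: "b > 0" "b \<le> a" using d assms unfolding b_def by auto
  have pos: "H v > 0" if "v \<in> {-b<..<b}" for v
  proof -
    have "dist v 0 < d" using that unfolding b_def by (auto simp: dist_real_def)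
    then have "\<bar>H v - H 0\<bar> < H 0" using d(2) by (simp add: dist_real_def)
    then show ?thesis by arith
  qed
  have "hat H v" if "v \<in> {-b<..<b}" for v
    using assms(1) that b unfolding ra_iff_hat by auto
  then have "real_analytic_on (\<lambda>v. sqrt (H v)) {-b<..<b}"
    unfolding ra_iff_hat using pos by (auto intro: hat_sqrt)
  then show ?thesis using b pos by blast
qed


lemma smax_exists:
  fixes \<sigma> :: "real \<Rightarrow> real" and J :: "real set"
  assumes J: "is_interval J" "open J" "J \<noteq> {}" "\<forall>x. \<exists>t\<in>J. t < x"
    and mono: "\<And>x y. x \<in> J \<Longrightarrow> y \<in> J \<Longrightarrow> x < y \<Longrightarrow> \<sigma> x < \<sigma> y"
    and cont: "continuous_on J \<sigma>"
    and lim: "(\<sigma> \<longlongrightarrow> s0) at_bot" and above: "\<forall>t\<in>J. s0 < \<sigma> t"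
  shows "\<exists>smax. ivl0 smax = (\<lambda>s. s - s0) ` (\<sigma> ` J) \<and> smax > 0"
proof -
  define M where "M = (SUP t\<in>J. ereal (\<sigma> t))"
  define smax where "smax = M - ereal s0"
  have mem: "s \<in> ivl0 smax \<longleftrightarrow> s + s0 \<in> \<sigma> ` J" for s
  proof
    assume "s \<in> ivl0 smax"
    then have s: "0 < s" "ereal s < M - ereal s0" unfolding ivl0_def smax_def by auto
    then have "ereal s + ereal s0 < M" using ereal_less_minus[of "ereal s0" "ereal s" M] by simp
    then have "ereal (s + s0) < M" by simp
    then obtain t2 where t2: "t2 \<in> J" "s + s0 < \<sigma> t2" unfolding M_def less_SUP_iff by auto
    have "s0 < s + s0" using s by simp
    then have "eventually (\<lambda>t. \<sigma> t < s + s0) at_bot" using order_tendstoD(2)[OF lim] by blast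
    then obtain N where N: "\<And>t. t \<le> N \<Longrightarrow> \<sigma> t < s + s0" unfolding eventually_at_bot_linorder by blast
    obtain t1 where t1: "t1 \<in> J" "t1 < N" using J(4) by blast
    have lt: "\<sigma> t1 < s + s0" using N t1 by auto
    have t12: "t1 \<le> t2"
    proof (rule ccontr)
      assume "\<not> t1 \<le> t2" then have "\<sigma> t2 < \<sigma> t1" using mono[OF t2(1) t1(1)] by simp
      then show False using lt t2 by simp
    qed
    have sub: "{t1..t2} \<subseteq> J" by (rule interval_closed_sub[OF J(1) t1(1) t2(1)])
    have "\<exists>x. t1 \<le> x \<and> x \<le> t2 \<and> \<sigma> x = s + s0"
      using IVT'[of \<sigma> t1 "s + s0" t2] lt t2 t12 continuous_on_subset[OF cont sub] by auto
    then show "s + s0 \<in> \<sigma> ` J" using sub by force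
  next
    assume "s + s0 \<in> \<sigma> ` J"
    then obtain t where t: "t \<in> J" "\<sigma> t = s + s0" by auto
    then have s: "0 < s" using above by force
    obtain e where e: "e > 0" "ball t e \<subseteq> J" using J(2) t(1) open_contains_ball by blast
    have t': "t + e/2 \<in> J" using e by (intro subsetD[OF e(2)]) (auto simp: dist_real_def)
    have "\<sigma> t < \<sigma> (t + e/2)" using mono[OF t(1) t'] e by simp
    then have l1: "ereal (s + s0) < ereal (\<sigma> (t + e/2))" using t(2) by simp
    have l2: "ereal (\<sigma> (t + e/2)) \<le> M" unfolding M_def using t' by (rule SUP_upper)
    have "ereal (s + s0) < M" using less_le_trans[OF l1 l2] .
    then have "ereal s + ereal s0 < M" by simp
    then have "ereal s < M - ereal s0" using ereal_less_minus[of "ereal s0" "ereal s" M] by simp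
    then show "s \<in> ivl0 smax" using s unfolding ivl0_def smax_def by auto
  qed
  have eq: "ivl0 smax = (\<lambda>s. s - s0) ` (\<sigma> ` J)"
  proof (intro set_eqI iffI)
    fix s assume "s \<in> ivl0 smax"
    then have "s + s0 \<in> \<sigma> ` J" using mem by blast
    moreover have "s = (\<lambda>s. s - s0) (s + s0)" by simp
    ultimately show "s \<in> (\<lambda>s. s - s0) ` (\<sigma> ` J)" by (rule rev_image_eqI)
  next
    fix s assume "s \<in> (\<lambda>s. s - s0) ` (\<sigma> ` J)"
    then obtain u where "u \<in> \<sigma> ` J" "s = u - s0" by auto
    then show "s \<in> ivl0 smax" using mem[of s] by simp
  qed
  obtain t where "t \<in> J" using J(3) by blast
  then have "\<sigma> t - s0 \<in> ivl0 smax" using mem by simp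
  then have a: "0 < \<sigma> t - s0" "ereal (\<sigma> t - s0) < smax" unfolding ivl0_def by auto
  have "(0::ereal) < ereal (\<sigma> t - s0)" using a(1) by simp
  then have "smax > 0" using a(2) by (rule less_trans)
  then show ?thesis using eq by blast
qed




lemma sqrt_comp_deriv:
  assumes "(f has_real_derivative f') (at x)" "f x > 0"
  shows "((\<lambda>x. sqrt (f x)) has_real_derivative f' / (2 * sqrt (f x))) (at x)"
proof -
  have "(sqrt has_real_derivative inverse (sqrt (f x)) / 2) (at (f x))"
    using assms(2) by (rule DERIV_real_sqrt)
  from DERIV_chain2[OF this assms(1)] show ?thesis by (simp add: field_simps)
qed

lemma rho_sq:
  fixes \<rho> :: real assumes "0 < \<rho>" "\<rho> < 1" shows "\<rho>\<^sup>2 < 1" "0 < 1 - \<rho>\<^sup>2"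
    "(sqrt (1 - \<rho>\<^sup>2))\<^sup>2 = 1 - \<rho>\<^sup>2" "sqrt (1 - \<rho>\<^sup>2) > 0"
proof -
  have "\<rho> * \<rho> < 1 * 1" using assms by (intro mult_strict_mono) auto
  then show a: "\<rho>\<^sup>2 < 1" by (simp add: power2_eq_square)
  then show b: "0 < 1 - \<rho>\<^sup>2" by simp
  then show "(sqrt (1 - \<rho>\<^sup>2))\<^sup>2 = 1 - \<rho>\<^sup>2" by simp
  show "sqrt (1 - \<rho>\<^sup>2) > 0" using b by simp
qed

lemma alg1:
  fixes \<rho> r \<rho>' :: real
  assumes "0 < \<rho>" "\<rho> < 1" "r > 0" "\<rho>' = toy_rhs \<beta> g \<rho> r"
  shows "((-(2 * \<rho> * \<rho>')) / (2 * sqrt (1 - \<rho>\<^sup>2)) * r - sqrt (1 - \<rho>\<^sup>2) * \<rho>) / (r * r) * inverse (\<rho> / r)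
     = eta_rhs \<beta> g (sqrt (1 - \<rho>\<^sup>2) / r) (r\<^sup>2)"
proof -
  define q where "q = sqrt (1 - \<rho>\<^sup>2)"
  have q2: "q\<^sup>2 = 1 - \<rho>\<^sup>2" unfolding q_def using rho_sq[OF assms(1,2)] by simp
  have qpos: "q > 0" unfolding q_def using rho_sq[OF assms(1,2)] by simp
  have s: "sqrt (1 - (q / r)\<^sup>2 * r\<^sup>2) = \<rho>"
  proof -
    have "1 - (q / r)\<^sup>2 * r\<^sup>2 = \<rho>\<^sup>2" using q2 assms(3) by (simp add: power_divide)
    then show ?thesis using assms(1) by simp
  qed
  have r': "\<rho>' = 3/2 * q\<^sup>2 / r * (-1 + q * (\<beta> * r\<^sup>2 * g (r\<^sup>2) + \<rho>) / r)"
    using assms(4) unfolding toy_rhs_def q_def[symmetric] unfolding q2[symmetric] .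
  show ?thesis
    unfolding q_def[symmetric] eta_rhs_def s r' using assms(1,3) qpos
    by (simp add: field_simps power2_eq_square)
qed

lemma alg2:
  fixes \<rho> r \<eta> w E :: real
  assumes "0 < \<rho>" "\<rho> < 1" "r > 0" "\<eta> = sqrt (1 - \<rho>\<^sup>2) / r" "w = r\<^sup>2" "E = eta_rhs \<beta> g \<eta> w"
  shows "(-(2 * \<eta> * E * w + \<eta>\<^sup>2 * (2 * w)) / (2 * \<rho>)) * inverse (r / \<rho>) = toy_rhs \<beta> g \<rho> r"
proof -
  define q where "q = sqrt (1 - \<rho>\<^sup>2)"
  have q2: "q\<^sup>2 = 1 - \<rho>\<^sup>2" unfolding q_def using rho_sq[OF assms(1,2)] by simp
  have s: "sqrt (1 - \<eta>\<^sup>2 * w) = \<rho>"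
  proof -
    have "1 - \<eta>\<^sup>2 * w = \<rho>\<^sup>2" using q2 assms(3,4,5) unfolding q_def[symmetric] by (simp add: power_divide)
    then show ?thesis using assms(1) by simp
  qed
  have E: "E = \<eta> / 2 * (1 - 3 * \<eta> * \<rho>) - 3/2 * \<beta> * \<eta>\<^sup>2 * w * g w"
    using assms(6) unfolding eta_rhs_def s .
  show ?thesis
    unfolding toy_rhs_def q_def[symmetric] unfolding q2[symmetric] E assms(4,5)[unfolded q_def[symmetric]]
    using assms(1,3) by (simp add: field_simps power2_eq_square)
qed




lemma ev_right_ex: "eventually P (at_right (0::real)) \<Longrightarrow> \<exists>x. P x"
  using eventually_happens'[of "at_right (0::real)" P] by simp

lemma fst_Phi: "fst (Phi (a, b)) = sqrt (1 - a\<^sup>2) / b" and snd_Phi: "snd (Phi (a, b)) = b\<^sup>2"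
  by (simp_all add: Phi_def)

lemma part1:
  fixes g :: "real \<Rightarrow> real" and \<beta> :: real
  assumes g_an: "real_analytic_on g UNIV"
  shows
   "(\<forall>\<rho> r smax sstar s1 \<tau>.
       toy_tip_solution \<beta> g \<rho> r smax \<and> 0 < sstar \<and> sstar \<le> smax \<and>
       (\<forall>s\<in>ivl0 sstar. \<rho> s > 0) \<and> s1 \<in> ivl0 sstar \<and>
       (\<forall>s\<in>ivl0 sstar. (\<tau> has_real_derivative \<rho> s / r s) (at s)) \<and> \<tau> s1 = 0
       \<longrightarrow>
       diffeo_onto_range \<tau> (ivl0 sstar) \<and>
       filterlim \<tau> at_bot (at_right 0) \<and>
       toy_t_tip_solution \<beta> g
         (\<lambda>t. fst (Phi (\<rho> (the_inv_into (ivl0 sstar) \<tau> t), r (the_inv_into (ivl0 sstar) \<tau> t))))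
         (\<lambda>t. snd (Phi (\<rho> (the_inv_into (ivl0 sstar) \<tau> t), r (the_inv_into (ivl0 sstar) \<tau> t))))
         (\<tau> ` ivl0 sstar))"
proof (intro allI impI)
  fix \<rho> r :: "real \<Rightarrow> real" and smax sstar :: ereal and s1 :: real and \<tau> :: "real \<Rightarrow> real"
  assume H: "toy_tip_solution \<beta> g \<rho> r smax \<and> 0 < sstar \<and> sstar \<le> smax \<and>
       (\<forall>s\<in>ivl0 sstar. \<rho> s > 0) \<and> s1 \<in> ivl0 sstar \<and>
       (\<forall>s\<in>ivl0 sstar. (\<tau> has_real_derivative \<rho> s / r s) (at s)) \<and> \<tau> s1 = 0"
  define S where "S = ivl0 sstar"
  have tip: "toy_tip_solution \<beta> g \<rho> r smax" using H by blast
  have sle: "sstar \<le> smax" using H by blast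
  have rpos0: "\<And>s. s \<in> S \<Longrightarrow> \<rho> s > 0" using H unfolding S_def by blast
  have s1S: "s1 \<in> S" using H unfolding S_def by blast
  have tder: "\<And>s. s \<in> S \<Longrightarrow> (\<tau> has_real_derivative \<rho> s / r s) (at s)" using H unfolding S_def by blast
  have ts1: "\<tau> s1 = 0" using H by blast
  have SS: "S \<subseteq> ivl0 smax" unfolding S_def using sle by (rule ivl0_mono)
  have Sint: "is_interval S" and Sopen: "open S" unfolding S_def by (rule ivl0_interval, rule ivl0_open)
  have Spos: "\<And>s. s \<in> S \<Longrightarrow> 0 < s" unfolding S_def ivl0_def by auto
  have s1pos: "s1 > 0" using Spos s1S by blast
  have inS: "\<And>s. 0 < s \<Longrightarrow> s \<le> s1 \<Longrightarrow> s \<in> S" using s1S unfolding S_def by (rule ivl0_down)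
  have sol: "toy_solution \<beta> g \<rho> r (ivl0 smax)" using tip unfolding toy_tip_solution_def by blast
  have rhoder: "\<And>s. s \<in> S \<Longrightarrow> (\<rho> has_real_derivative toy_rhs \<beta> g (\<rho> s) (r s)) (at s)"
    using sol SS unfolding toy_solution_def by blast
  have rder: "\<And>s. s \<in> S \<Longrightarrow> (r has_real_derivative \<rho> s) (at s)"
    using sol SS unfolding toy_solution_def by blast
  have bnd: "\<And>s. s \<in> S \<Longrightarrow> 0 < \<rho> s \<and> \<rho> s < 1 \<and> 0 < r s"
  proof -
    fix s assume s: "s \<in> S"
    then have "(\<rho> s, r s) \<in> M0" using sol SS unfolding toy_solution_def by blast
    then show "0 < \<rho> s \<and> \<rho> s < 1 \<and> 0 < r s" using rpos0[OF s] unfolding M0_def by auto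
  qed
  have lrho: "(\<rho> \<longlongrightarrow> 1) (at_right 0)" and lr: "(r \<longlongrightarrow> 0) (at_right 0)"
    using tip unfolding toy_tip_solution_def by blast+
  obtain \<eta>0 where eta0: "\<eta>0 > 0" "((\<lambda>s. sqrt (1 - (\<rho> s)\<^sup>2) / r s) \<longlongrightarrow> \<eta>0) (at_right 0)"
    using tip unfolding toy_tip_solution_def by blast
  obtain s0 G where s0: "s0 \<in> ivl0 smax" and Gan: "real_analytic_on G {-((r s0)\<^sup>2)<..<(r s0)\<^sup>2}"
    and Geq: "\<And>s. s \<in> {0<..<s0} \<Longrightarrow> \<rho> s = G ((r s)\<^sup>2)"
    using tip unfolding toy_tip_solution_def by blast
  have fcont: "continuous_on S (\<lambda>s. \<rho> s / r s)"
  proof (intro continuous_at_imp_continuous_on ballI)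
    fix s assume s: "s \<in> S"
    have "isCont \<rho> s" using rhoder[OF s] by (rule DERIV_isCont)
    moreover have "isCont r s" using rder[OF s] by (rule DERIV_isCont)
    ultimately show "isCont (\<lambda>s. \<rho> s / r s) s" using bnd[OF s] by (intro continuous_intros) auto
  qed
  have fpos: "\<And>s. s \<in> S \<Longrightarrow> \<rho> s / r s > 0" using bnd by simp
  note D = diffeo_gen[OF Sint Sopen tder fpos fcont]
  have tmono: "\<And>x y. x \<in> S \<Longrightarrow> y \<in> S \<Longrightarrow> x < y \<Longrightarrow> \<tau> x < \<tau> y"
    by (rule mono_on_interval[OF Sint tder fpos])
  define J where "J = \<tau> ` S"
  define ti where "ti = the_inv_into S \<tau>"
  have tiS: "\<And>t. t \<in> J \<Longrightarrow> ti t \<in> S" unfolding J_def ti_def using the_inv_into_into[OF D(2)] by blast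
  have tti: "\<And>t. t \<in> J \<Longrightarrow> \<tau> (ti t) = t" unfolding J_def ti_def using f_the_inv_into_f[OF D(2)] by blast
  have tit: "\<And>s. s \<in> S \<Longrightarrow> ti (\<tau> s) = s" unfolding ti_def using the_inv_into_f_f[OF D(2)] by blast
  have tider: "\<And>t. t \<in> J \<Longrightarrow> (ti has_real_derivative inverse (\<rho> (ti t) / r (ti t))) (at t)"
    unfolding J_def ti_def using D(5) by blast
  have tlim: "filterlim \<tau> at_bot (at_right 0)"
    by (rule tau_to_minus_inf[OF s1pos inS tder rder bnd lrho lr])
  have Jint: "is_interval J" and Jopen: "open J" unfolding J_def using D(3,4) by auto
  have s1J: "\<tau> s1 \<in> J" unfolding J_def using s1S by blast
  have Jne: "J \<noteq> {}" using s1J by blast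
  have Junb: "\<forall>x. \<exists>t\<in>J. t < x"
  proof
    fix x :: real
    have "eventually (\<lambda>s. \<tau> s \<le> x - 1) (at_right 0)" using tlim unfolding filterlim_at_bot by blast
    moreover have "eventually (\<lambda>s. s \<in> S) (at_right 0)" using eventually_ivl0 s1S unfolding S_def by blast
    ultimately obtain s where "\<tau> s \<le> x - 1" "s \<in> S" using ev_right_ex[OF eventually_conj] by blast
    then show "\<exists>t\<in>J. t < x" unfolding J_def by force
  qed
  have Jdown: "\<And>t u. t \<in> J \<Longrightarrow> u \<le> t \<Longrightarrow> u \<in> J" using unb_down[OF Jint Junb] by blast
  have evJ: "eventually (\<lambda>t. t \<in> J) at_bot"
    unfolding eventually_at_bot_linorder using Jdown[OF s1J] by blast
  have tilim: "filterlim ti (at_right 0) at_bot"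
    unfolding filterlim_at
  proof
    show "eventually (\<lambda>t. ti t \<in> {0<..} \<and> ti t \<noteq> 0) at_bot"
      by (rule eventually_mono[OF evJ]) (use tiS Spos in force)
    show "(ti \<longlongrightarrow> 0) at_bot"
    proof (rule order_tendstoI)
      fix a :: real assume a: "a < 0"
      show "eventually (\<lambda>t. a < ti t) at_bot"
        by (rule eventually_mono[OF evJ]) (use tiS Spos a in force)
    next
      fix a :: real assume a: "0 < a"
      define s where "s = min (a/2) s1"
      have s: "s \<in> S" "s < a" using inS[of s] a s1pos unfolding s_def by auto
      show "eventually (\<lambda>t. ti t < a) at_bot"
        unfolding eventually_at_bot_linorder
      proof (intro exI[of _ "\<tau> s - 1"] allI impI)
        fix t assume t: "t \<le> \<tau> s - 1"
        then have tJ: "t \<in> J" using Jdown[of "\<tau> s" t] s unfolding J_def by force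
        have "ti t < s"
        proof (rule ccontr)
          assume "\<not> ti t < s"
          then have "\<tau> s \<le> \<tau> (ti t)" using tmono[OF s(1) tiS[OF tJ]] by (cases "s = ti t") auto
          then show False using tti[OF tJ] t by simp
        qed
        then show "ti t < a" using s by simp
      qed
    qed
  qed
  define es where "es = (\<lambda>s. sqrt (1 - (\<rho> s)\<^sup>2) / r s)"
  define etaT where "etaT = (\<lambda>t. fst (Phi (\<rho> (the_inv_into (ivl0 sstar) \<tau> t), r (the_inv_into (ivl0 sstar) \<tau> t))))"
  define wT where "wT = (\<lambda>t. snd (Phi (\<rho> (the_inv_into (ivl0 sstar) \<tau> t), r (the_inv_into (ivl0 sstar) \<tau> t))))"
  have etaT: "etaT = (\<lambda>t. es (ti t))" unfolding etaT_def es_def ti_def S_def by (simp add: fst_Phi)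
  have wT: "wT = (\<lambda>t. (r (ti t))\<^sup>2)" unfolding wT_def ti_def S_def by (simp add: snd_Phi)
  have esder: "(es has_real_derivative
      ((-(2 * \<rho> s * toy_rhs \<beta> g (\<rho> s) (r s))) / (2 * sqrt (1 - (\<rho> s)\<^sup>2)) * r s - sqrt (1 - (\<rho> s)\<^sup>2) * \<rho> s) / (r s * r s)) (at s)"
    if s: "s \<in> S" for s
  proof -
    have b: "0 < \<rho> s" "\<rho> s < 1" "0 < r s" using bnd[OF s] by auto
    have d1: "((\<lambda>s. 1 - (\<rho> s)\<^sup>2) has_real_derivative -(2 * \<rho> s * toy_rhs \<beta> g (\<rho> s) (r s))) (at s)"
      using rhoder[OF s] by (auto intro!: derivative_eq_intros)
    have d2: "((\<lambda>s. sqrt (1 - (\<rho> s)\<^sup>2)) has_real_derivative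
        (-(2 * \<rho> s * toy_rhs \<beta> g (\<rho> s) (r s))) / (2 * sqrt (1 - (\<rho> s)\<^sup>2))) (at s)"
      by (rule sqrt_comp_deriv[OF d1]) (use rho_sq[OF b(1,2)] in auto)
    show ?thesis unfolding es_def using DERIV_divide[OF d2 rder[OF s]] b(3) by simp
  qed
  have etader: "(etaT has_real_derivative eta_rhs \<beta> g (etaT t) (wT t)) (at t)" if t: "t \<in> J" for t
  proof -
    have s: "ti t \<in> S" using tiS[OF t] .
    have b: "0 < \<rho> (ti t)" "\<rho> (ti t) < 1" "0 < r (ti t)" using bnd[OF s] by auto
    have "((\<lambda>t. es (ti t)) has_real_derivative
      ((-(2 * \<rho> (ti t) * toy_rhs \<beta> g (\<rho> (ti t)) (r (ti t)))) / (2 * sqrt (1 - (\<rho> (ti t))\<^sup>2)) * r (ti t)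
        - sqrt (1 - (\<rho> (ti t))\<^sup>2) * \<rho> (ti t)) / (r (ti t) * r (ti t)) * inverse (\<rho> (ti t) / r (ti t))) (at t)"
      by (rule DERIV_chain2[OF esder[OF s] tider[OF t]])
    moreover have "etaT t = sqrt (1 - (\<rho> (ti t))\<^sup>2) / r (ti t)" "wT t = (r (ti t))\<^sup>2"
      unfolding etaT wT es_def by simp_all
    ultimately show ?thesis unfolding etaT[symmetric] using alg1[OF b refl] by simp
  qed
  have wder: "(wT has_real_derivative 2 * wT t) (at t)" if t: "t \<in> J" for t
  proof -
    have s: "ti t \<in> S" using tiS[OF t] .
    have b: "0 < \<rho> (ti t)" "\<rho> (ti t) < 1" "0 < r (ti t)" using bnd[OF s] by auto
    have d: "((\<lambda>s. (r s)\<^sup>2) has_real_derivative 2 * r (ti t) * \<rho> (ti t)) (at (ti t))"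
      using rder[OF s] by (auto intro!: derivative_eq_intros)
    have "((\<lambda>t. (r (ti t))\<^sup>2) has_real_derivative 2 * r (ti t) * \<rho> (ti t) * inverse (\<rho> (ti t) / r (ti t))) (at t)"
      by (rule DERIV_chain2[OF d tider[OF t]])
    moreover have "2 * r (ti t) * \<rho> (ti t) * inverse (\<rho> (ti t) / r (ti t)) = 2 * wT t"
      unfolding wT using b by (simp add: field_simps power2_eq_square)
    ultimately show ?thesis unfolding wT by simp
  qed
  have N1: "(etaT t, wT t) \<in> N1" if t: "t \<in> J" for t
  proof -
    have s: "ti t \<in> S" using tiS[OF t] .
    have b: "0 < \<rho> (ti t)" "\<rho> (ti t) < 1" "0 < r (ti t)" using bnd[OF s] by auto
    note q = rho_sq[OF b(1,2)]
    have "etaT t > 0" unfolding etaT es_def using q b by simp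
    moreover have "(etaT t)\<^sup>2 * wT t = 1 - (\<rho> (ti t))\<^sup>2"
      unfolding etaT wT es_def using q b by (simp add: power_divide)
    moreover have "(\<rho> (ti t))\<^sup>2 > 0" using b by simp
    ultimately show ?thesis unfolding N1_def by simp
  qed
  have tsol: "t_solution \<beta> g etaT wT J"
    unfolding t_solution_def using N1 etader wder by blast
  have wlim: "(wT \<longlongrightarrow> 0) at_bot"
  proof -
    have "((\<lambda>s. (r s)\<^sup>2) \<longlongrightarrow> 0\<^sup>2) (at_right 0)" by (intro tendsto_intros lr)
    then have "filterlim (\<lambda>s. (r s)\<^sup>2) (nhds 0) (at_right 0)" by simp
    from filterlim_compose[OF this tilim] show ?thesis unfolding wT by simp
  qed
  have elim0: "(etaT \<longlongrightarrow> \<eta>0) at_bot"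
  proof -
    have "filterlim es (nhds \<eta>0) (at_right 0)" using eta0(2) unfolding es_def .
    from filterlim_compose[OF this tilim] show ?thesis unfolding etaT .
  qed
  have gc: "isCont g 0" using ra_cont[OF g_an] by simp
  have e13: "\<eta>0 = 1/3"
    by (rule limit_fixpoint[OF elim0 wlim gc _ eta0(1)]) (rule eventually_mono[OF evJ etader])
  have elim: "(etaT \<longlongrightarrow> 1/3) at_bot" using elim0 e13 by simp
  define a where "a = (r s0)\<^sup>2"
  have s0pos: "0 < s0" using s0 unfolding ivl0_def by auto
  have rs0: "r s0 > 0"
  proof -
    have "(\<rho> s0, r s0) \<in> M0" using sol s0 unfolding toy_solution_def by blast
    then show ?thesis unfolding M0_def by auto
  qed
  have apos: "a > 0" unfolding a_def using rs0 by simp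
  have Gan': "real_analytic_on G {-a<..<a}" using Gan unfolding a_def .
  have G0: "G 0 = 1"
  proof -
    have "isCont G 0" using ra_cont[OF Gan'] apos by simp
    moreover have "((\<lambda>s. (r s)\<^sup>2) \<longlongrightarrow> 0) (at_right 0)" using tendsto_power[OF lr, of 2] by simp
    ultimately have l1: "((\<lambda>s. G ((r s)\<^sup>2)) \<longlongrightarrow> G 0) (at_right 0)" by (rule isCont_tendsto_compose)
    have "eventually (\<lambda>s. \<rho> s = G ((r s)\<^sup>2)) (at_right 0)"
      unfolding eventually_at_right_field using s0pos Geq by (intro exI[of _ s0]) auto
    then have "((\<lambda>s. G ((r s)\<^sup>2)) \<longlongrightarrow> 1) (at_right 0)" using lrho tendsto_cong by force
    from tendsto_unique[OF _ l1 this] show ?thesis by simp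
  qed
  have "real_analytic_on (\<lambda>v. 1 - G v * G v) {-a<..<a}"
    using Gan' unfolding ra_iff_hat by (auto intro!: hat_diff hat_const hat_mult)
  then obtain Hf where Han: "real_analytic_on Hf {-a<..<a}"
    and Heq: "\<And>v. v \<in> {-a<..<a} \<Longrightarrow> v \<noteq> 0 \<Longrightarrow> Hf v = (1 - G v * G v) / v"
    using ra_div_v[of "\<lambda>v. 1 - G v * G v" "{-a<..<a}"] apos G0 by auto
  have rl2: "((\<lambda>s. (r s)\<^sup>2) \<longlongrightarrow> 0) (at_right 0)" using tendsto_power[OF lr, of 2] by simp
  have evS: "eventually (\<lambda>s. s \<in> S) (at_right 0)" using eventually_ivl0 s1S unfolding S_def by blast
  have evs0: "eventually (\<lambda>s. s < s0) (at_right 0)"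
    unfolding eventually_at_right_field using s0pos by (intro exI[of _ s0]) auto
  have eva: "eventually (\<lambda>s. (r s)\<^sup>2 < a) (at_right 0)" using order_tendstoD(2)[OF rl2 apos] .
  have Hval: "Hf ((r s)\<^sup>2) = (es s)\<^sup>2" if s: "s \<in> S" "s < s0" "(r s)\<^sup>2 < a" for s
  proof -
    have b: "0 < \<rho> s" "\<rho> s < 1" "0 < r s" using bnd[OF s(1)] by auto
    have "(r s)\<^sup>2 \<in> {-a<..<a}" using s(3) apos by (auto intro: less_le_trans[of _ 0])
    moreover have "(r s)\<^sup>2 \<noteq> 0" using b by simp
    ultimately have "Hf ((r s)\<^sup>2) = (1 - G ((r s)\<^sup>2) * G ((r s)\<^sup>2)) / (r s)\<^sup>2" by (rule Heq)
    also have "G ((r s)\<^sup>2) = \<rho> s" using Geq[of s] Spos[OF s(1)] s(2) by simp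
    finally show ?thesis unfolding es_def using rho_sq[OF b(1,2)] by (simp add: power_divide power2_eq_square)
  qed
  have Hf0: "Hf 0 = \<eta>0\<^sup>2"
  proof -
    have "isCont Hf 0" using ra_cont[OF Han] apos by simp
    then have l1: "((\<lambda>s. Hf ((r s)\<^sup>2)) \<longlongrightarrow> Hf 0) (at_right 0)" using rl2 by (rule isCont_tendsto_compose)
    have ev: "eventually (\<lambda>s. Hf ((r s)\<^sup>2) = (es s)\<^sup>2) (at_right 0)"
      using evS evs0 eva by eventually_elim (rule Hval)
    have "((\<lambda>s. (es s)\<^sup>2) \<longlongrightarrow> \<eta>0\<^sup>2) (at_right 0)" using eta0(2) unfolding es_def[symmetric] by (intro tendsto_intros)
    then have "((\<lambda>s. Hf ((r s)\<^sup>2)) \<longlongrightarrow> \<eta>0\<^sup>2) (at_right 0)" using tendsto_cong[OF ev] by simp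
    from tendsto_unique[OF _ l1 this] show ?thesis by simp
  qed
  obtain b where b: "b > 0" "b \<le> a" "\<And>v. v \<in> {-b<..<b} \<Longrightarrow> Hf v > 0"
    and Kan: "real_analytic_on (\<lambda>v. sqrt (Hf v)) {-b<..<b}"
    using ra_sqrt_near0[OF Han apos] Hf0 eta0(1) by auto
  have evt: "eventually (\<lambda>t. t \<in> J \<and> wT t < b \<and> ti t < s0) at_bot"
  proof -
    have "eventually (\<lambda>t. wT t < b) at_bot" using order_tendstoD(2)[OF wlim b(1)] .
    moreover have "eventually (\<lambda>t. ti t < s0) at_bot"
      using tilim unfolding filterlim_at using order_tendstoD(2)[of ti 0 at_bot s0] s0pos by blast
    ultimately show ?thesis using evJ by eventually_elim blast
  qed
  then obtain t0 where t0: "\<And>t. t \<le> t0 \<Longrightarrow> t \<in> J \<and> wT t < b \<and> ti t < s0"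
    unfolding eventually_at_bot_linorder by blast
  have t0J: "t0 \<in> J" using t0 by blast
  have wT0: "0 \<le> wT t0" unfolding wT by simp
  have S2': "\<exists>t0\<in>J. \<exists>G. real_analytic_on G {-(wT t0)<..<wT t0} \<and> (\<forall>t\<in>J. t < t0 \<longrightarrow> etaT t = G (wT t))"
  proof (intro bexI[OF _ t0J] exI[of _ "\<lambda>v. sqrt (Hf v)"] conjI ballI impI)
    show "real_analytic_on (\<lambda>v. sqrt (Hf v)) {-(wT t0)<..<wT t0}"
      by (rule ra_subset[OF Kan]) (use t0[of t0] in auto)
    fix t assume t: "t \<in> J" "t < t0"
    then have c: "wT t < b" "ti t < s0" using t0[of t] by auto
    have s: "ti t \<in> S" using tiS[OF t(1)] .
    have bb: "0 < \<rho> (ti t)" "\<rho> (ti t) < 1" "0 < r (ti t)" using bnd[OF s] by auto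
    have "(r (ti t))\<^sup>2 < a" using c(1) b(2) unfolding wT by simp
    then have "Hf (wT t) = (es (ti t))\<^sup>2" unfolding wT using Hval[OF s c(2)] by simp
    moreover have "es (ti t) \<ge> 0" unfolding es_def using bb rho_sq[OF bb(1,2)] by simp
    ultimately show "etaT t = sqrt (Hf (wT t))" unfolding etaT by simp
  qed
  have tt: "toy_t_tip_solution \<beta> g etaT wT J"
    unfolding toy_t_tip_solution_def using Jint Jopen Jne Junb tsol elim wlim S2' by blast
  have "diffeo_onto_range \<tau> S \<and> filterlim \<tau> at_bot (at_right 0) \<and> toy_t_tip_solution \<beta> g etaT wT J"
    using D(7) tlim tt by blast
  then show "diffeo_onto_range \<tau> (ivl0 sstar) \<and>
       filterlim \<tau> at_bot (at_right 0) \<and>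
       toy_t_tip_solution \<beta> g
         (\<lambda>t. fst (Phi (\<rho> (the_inv_into (ivl0 sstar) \<tau> t), r (the_inv_into (ivl0 sstar) \<tau> t))))
         (\<lambda>t. snd (Phi (\<rho> (the_inv_into (ivl0 sstar) \<tau> t), r (the_inv_into (ivl0 sstar) \<tau> t))))
         (\<tau> ` ivl0 sstar)"
    unfolding etaT_def wT_def J_def S_def .
qed



lemma fst_Phi2: "fst (Phi (a, b)) = sqrt (1 - a\<^sup>2) / b" and snd_Phi2: "snd (Phi (a, b)) = b\<^sup>2"
  by (simp_all add: Phi_def)

lemma part2:
  fixes g :: "real \<Rightarrow> real" and \<beta> :: real
  assumes g_an: "real_analytic_on g UNIV"
  shows
    "(\<forall>\<eta> w J t0 \<sigma> \<rho>h rh.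
       toy_t_tip_solution \<beta> g \<eta> w J \<and> (\<forall>t\<in>J. (\<eta> t, w t) \<in> N0) \<and>
       (\<forall>t\<in>J. (\<rho>h t, rh t) \<in> M1 \<and> Phi (\<rho>h t, rh t) = (\<eta> t, w t)) \<and>
       t0 \<in> J \<and>
       (\<forall>t\<in>J. (\<sigma> has_real_derivative rh t / \<rho>h t) (at t)) \<and> \<sigma> t0 = 0
       \<longrightarrow>
       diffeo_onto_range \<sigma> J \<and>
       (\<exists>s0::real. (\<sigma> \<longlongrightarrow> s0) at_bot \<and>
          (\<exists>smax. ivl0 smax = (\<lambda>s. s - s0) ` (\<sigma> ` J) \<and>
             toy_tip_solution \<beta> g
               (\<lambda>s. \<rho>h (the_inv_into J \<sigma> (s + s0)))
               (\<lambda>s. rh (the_inv_into J \<sigma> (s + s0))) smax)))"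
proof (intro allI impI)
  fix \<eta> w :: "real \<Rightarrow> real" and J :: "real set" and t0 :: real and \<sigma> \<rho>h rh :: "real \<Rightarrow> real"
  assume H: "toy_t_tip_solution \<beta> g \<eta> w J \<and> (\<forall>t\<in>J. (\<eta> t, w t) \<in> N0) \<and>
       (\<forall>t\<in>J. (\<rho>h t, rh t) \<in> M1 \<and> Phi (\<rho>h t, rh t) = (\<eta> t, w t)) \<and>
       t0 \<in> J \<and>
       (\<forall>t\<in>J. (\<sigma> has_real_derivative rh t / \<rho>h t) (at t)) \<and> \<sigma> t0 = 0"
  have tt: "toy_t_tip_solution \<beta> g \<eta> w J" using H by blast
  have N0: "\<And>t. t \<in> J \<Longrightarrow> (\<eta> t, w t) \<in> N0" using H by blast
  have M1: "\<And>t. t \<in> J \<Longrightarrow> (\<rho>h t, rh t) \<in> M1" using H by blast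
  have Ph: "\<And>t. t \<in> J \<Longrightarrow> Phi (\<rho>h t, rh t) = (\<eta> t, w t)" using H by blast
  have sder: "\<And>t. t \<in> J \<Longrightarrow> (\<sigma> has_real_derivative rh t / \<rho>h t) (at t)" using H by blast
  have Jint: "is_interval J" and Jopen: "open J" and Jne: "J \<noteq> {}" and Junb: "\<forall>x. \<exists>t\<in>J. t < x"
    using tt unfolding toy_t_tip_solution_def by blast+
  have tsol: "t_solution \<beta> g \<eta> w J" using tt unfolding toy_t_tip_solution_def by blast
  have etader: "\<And>t. t \<in> J \<Longrightarrow> (\<eta> has_real_derivative eta_rhs \<beta> g (\<eta> t) (w t)) (at t)"
    and wder: "\<And>t. t \<in> J \<Longrightarrow> (w has_real_derivative 2 * w t) (at t)"
    using tsol unfolding t_solution_def by blast+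
  have elim: "(\<eta> \<longlongrightarrow> 1/3) at_bot" and wlim: "(w \<longlongrightarrow> 0) at_bot"
    using tt unfolding toy_t_tip_solution_def by blast+
  obtain t0' Ge where t0': "t0' \<in> J" and Gean: "real_analytic_on Ge {-(w t0')<..<w t0'}"
    and Geeq: "\<And>t. t \<in> J \<Longrightarrow> t < t0' \<Longrightarrow> \<eta> t = Ge (w t)"
    using tt unfolding toy_t_tip_solution_def by blast
  have Jdown: "\<And>t u. t \<in> J \<Longrightarrow> u \<le> t \<Longrightarrow> u \<in> J" using unb_down[OF Jint Junb] by blast
  have evJ: "eventually (\<lambda>t. t \<in> J) at_bot"
    unfolding eventually_at_bot_linorder using Jdown[OF t0'] by blast
  have pw: "0 < \<rho>h t \<and> \<rho>h t < 1 \<and> 0 < rh t \<and> 0 < w t \<and> 0 < \<eta> t \<and> rh t = sqrt (w t) \<and>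
      \<rho>h t = sqrt (1 - (\<eta> t)\<^sup>2 * w t) \<and> \<eta> t = sqrt (1 - (\<rho>h t)\<^sup>2) / rh t \<and> w t = (rh t)\<^sup>2 \<and>
      0 < 1 - (\<eta> t)\<^sup>2 * w t"
    if t: "t \<in> J" for t
  proof -
    have a: "0 < \<rho>h t" "\<rho>h t < 1" "0 < rh t" using M1[OF t] unfolding M1_def by auto
    have b: "0 < w t" "0 < \<eta> t" using N0[OF t] unfolding N0_def N1_def by auto
    have c: "\<eta> t = sqrt (1 - (\<rho>h t)\<^sup>2) / rh t" "w t = (rh t)\<^sup>2" using Ph[OF t] unfolding Phi_def by auto
    have d: "rh t = sqrt (w t)" using c(2) a(3) by simp
    note q = rho_sq[OF a(1,2)]
    have "(\<eta> t)\<^sup>2 * w t = 1 - (\<rho>h t)\<^sup>2" using c a q by (simp add: power_divide)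
    then have e: "1 - (\<eta> t)\<^sup>2 * w t = (\<rho>h t)\<^sup>2" by simp
    then have f: "\<rho>h t = sqrt (1 - (\<eta> t)\<^sup>2 * w t)" using a(1) by simp
    have g: "0 < 1 - (\<eta> t)\<^sup>2 * w t" unfolding e using a(1) by simp
    show ?thesis using a b c d f g by blast
  qed
  have pb: "\<And>t. t \<in> J \<Longrightarrow> 0 < \<rho>h t \<and> \<rho>h t < 1 \<and> 0 < rh t \<and> 0 < w t \<and> 0 < \<eta> t \<and> 0 < 1 - (\<eta> t)\<^sup>2 * w t"
    using pw by blast
  have prh: "\<And>t. t \<in> J \<Longrightarrow> rh t = sqrt (w t)" using pw by blast
  have prho: "\<And>t. t \<in> J \<Longrightarrow> \<rho>h t = sqrt (1 - (\<eta> t)\<^sup>2 * w t)" using pw by blast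
  have peta: "\<And>t. t \<in> J \<Longrightarrow> \<eta> t = sqrt (1 - (\<rho>h t)\<^sup>2) / rh t" using pw by blast
  have pww: "\<And>t. t \<in> J \<Longrightarrow> w t = (rh t)\<^sup>2" using pw by blast
  have rhder: "(rh has_real_derivative rh t) (at t)" if t: "t \<in> J" for t
  proof -
    have "((\<lambda>t. sqrt (w t)) has_real_derivative 2 * w t / (2 * sqrt (w t))) (at t)"
      by (rule sqrt_comp_deriv[OF wder[OF t]]) (use pb[OF t] in auto)
    then have "((\<lambda>t. sqrt (w t)) has_real_derivative rh t) (at t)"
      using pb[OF t] prh[OF t] by (simp add: real_div_sqrt)
    then show ?thesis
      by (rule has_field_derivative_transform_within_open[OF _ Jopen t]) (use prh in auto)
  qed
  have rhohder: "(\<rho>h has_real_derivative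
      (-(2 * \<eta> t * eta_rhs \<beta> g (\<eta> t) (w t) * w t + (\<eta> t)\<^sup>2 * (2 * w t))) / (2 * \<rho>h t)) (at t)"
    if t: "t \<in> J" for t
  proof -
    have d1: "((\<lambda>t. 1 - (\<eta> t)\<^sup>2 * w t) has_real_derivative
        -(2 * \<eta> t * eta_rhs \<beta> g (\<eta> t) (w t) * w t + (\<eta> t)\<^sup>2 * (2 * w t))) (at t)"
      using etader[OF t] wder[OF t] by (auto intro!: derivative_eq_intros simp: algebra_simps)
    have "((\<lambda>t. sqrt (1 - (\<eta> t)\<^sup>2 * w t)) has_real_derivative
        (-(2 * \<eta> t * eta_rhs \<beta> g (\<eta> t) (w t) * w t + (\<eta> t)\<^sup>2 * (2 * w t))) / (2 * sqrt (1 - (\<eta> t)\<^sup>2 * w t))) (at t)"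
      by (rule sqrt_comp_deriv[OF d1]) (use pb[OF t] in auto)
    then have "((\<lambda>t. sqrt (1 - (\<eta> t)\<^sup>2 * w t)) has_real_derivative
        (-(2 * \<eta> t * eta_rhs \<beta> g (\<eta> t) (w t) * w t + (\<eta> t)\<^sup>2 * (2 * w t))) / (2 * \<rho>h t)) (at t)"
      using prho[OF t] by simp
    then show ?thesis
      by (rule has_field_derivative_transform_within_open[OF _ Jopen t]) (use prho in auto)
  qed
  have fcont: "continuous_on J (\<lambda>t. rh t / \<rho>h t)"
  proof (intro continuous_at_imp_continuous_on ballI)
    fix t assume t: "t \<in> J"
    have "isCont rh t" using rhder[OF t] by (rule DERIV_isCont)
    moreover have "isCont \<rho>h t" using rhohder[OF t] by (rule DERIV_isCont)
    ultimately show "isCont (\<lambda>t. rh t / \<rho>h t) t" using pb[OF t] by (intro continuous_intros) auto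
  qed
  have fpos: "\<And>t. t \<in> J \<Longrightarrow> rh t / \<rho>h t > 0" using pb by simp
  note D = diffeo_gen[OF Jint Jopen sder fpos fcont]
  have smono: "\<And>x y. x \<in> J \<Longrightarrow> y \<in> J \<Longrightarrow> x < y \<Longrightarrow> \<sigma> x < \<sigma> y"
    by (rule mono_on_interval[OF Jint sder fpos])
  have scont: "continuous_on J \<sigma>"
    using sder by (intro continuous_at_imp_continuous_on ballI) (auto intro: DERIV_isCont)
  have rhohlim: "(\<rho>h \<longlongrightarrow> 1) at_bot"
  proof -
    have "((\<lambda>t. sqrt (1 - (\<eta> t)\<^sup>2 * w t)) \<longlongrightarrow> sqrt (1 - (1/3)\<^sup>2 * 0)) at_bot"
      by (intro tendsto_intros elim wlim)
    then have l: "((\<lambda>t. sqrt (1 - (\<eta> t)\<^sup>2 * w t)) \<longlongrightarrow> 1) at_bot" by simp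
    have "eventually (\<lambda>t. sqrt (1 - (\<eta> t)\<^sup>2 * w t) = \<rho>h t) at_bot"
      by (rule eventually_mono[OF evJ]) (use prho in auto)
    then show ?thesis using l tendsto_cong by force
  qed
  have ev12: "eventually (\<lambda>t. \<rho>h t > 1/2) at_bot" using order_tendstoD(1)[OF rhohlim, of "1/2"] by simp
  obtain s0 where s0lim: "(\<sigma> \<longlongrightarrow> s0) at_bot" and above: "\<forall>t\<in>J. s0 < \<sigma> t"
    using sigma_limit[OF Jint Junb sder rhder _ ev12] pb by blast
  obtain smax where smax: "ivl0 smax = (\<lambda>s. s - s0) ` (\<sigma> ` J)" "smax > 0"
    using smax_exists[OF Jint Jopen Jne Junb smono scont s0lim above] by blast
  define ti where "ti = the_inv_into J \<sigma>"
  define \<rho> where "\<rho> = (\<lambda>s. \<rho>h (ti (s + s0)))"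
  define r where "r = (\<lambda>s. rh (ti (s + s0)))"
  have memS: "s + s0 \<in> \<sigma> ` J" if "s \<in> ivl0 smax" for s
  proof -
    from that obtain u where "u \<in> \<sigma> ` J" "s = u - s0" unfolding smax(1) by blast
    then show ?thesis by simp
  qed
  have tiJ: "\<And>u. u \<in> \<sigma> ` J \<Longrightarrow> ti u \<in> J" unfolding ti_def using the_inv_into_into[OF D(2)] by blast
  have sti: "\<And>u. u \<in> \<sigma> ` J \<Longrightarrow> \<sigma> (ti u) = u" unfolding ti_def using f_the_inv_into_f[OF D(2)] by blast
  have tis: "\<And>t. t \<in> J \<Longrightarrow> ti (\<sigma> t) = t" unfolding ti_def using the_inv_into_f_f[OF D(2)] by blast
  have tider: "\<And>u. u \<in> \<sigma> ` J \<Longrightarrow> (ti has_real_derivative inverse (rh (ti u) / \<rho>h (ti u))) (at u)"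
    unfolding ti_def using D(5) by blast
  have tsder: "((\<lambda>s. ti (s + s0)) has_real_derivative inverse (rh (ti (s + s0)) / \<rho>h (ti (s + s0)))) (at s)"
    if s: "s \<in> ivl0 smax" for s
  proof -
    have "((\<lambda>s. s + s0) has_real_derivative 1) (at s)" by (auto intro!: derivative_eq_intros)
    from DERIV_chain2[OF tider[OF memS[OF s]] this] show ?thesis by simp
  qed
  have sJ: "\<And>s. s \<in> ivl0 smax \<Longrightarrow> ti (s + s0) \<in> J" using tiJ memS by blast
  have rhoder: "(\<rho> has_real_derivative toy_rhs \<beta> g (\<rho> s) (r s)) (at s)" if s: "s \<in> ivl0 smax" for s
  proof -
    define t where "t = ti (s + s0)"
    have t: "t \<in> J" unfolding t_def using sJ[OF s] .
    have "((\<lambda>s. \<rho>h (ti (s + s0))) has_real_derivative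
      (-(2 * \<eta> t * eta_rhs \<beta> g (\<eta> t) (w t) * w t + (\<eta> t)\<^sup>2 * (2 * w t))) / (2 * \<rho>h t)
        * inverse (rh t / \<rho>h t)) (at s)"
      unfolding t_def by (rule DERIV_chain2[OF rhohder[OF sJ[OF s]] tsder[OF s]])
    moreover have "(-(2 * \<eta> t * eta_rhs \<beta> g (\<eta> t) (w t) * w t + (\<eta> t)\<^sup>2 * (2 * w t))) / (2 * \<rho>h t)
        * inverse (rh t / \<rho>h t) = toy_rhs \<beta> g (\<rho>h t) (rh t)"
      using pb[OF t] by (intro alg2 peta[OF t] pww[OF t]) auto
    ultimately show ?thesis unfolding \<rho>_def r_def t_def by simp
  qed
  have rder: "(r has_real_derivative \<rho> s) (at s)" if s: "s \<in> ivl0 smax" for s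
  proof -
    define t where "t = ti (s + s0)"
    have t: "t \<in> J" unfolding t_def using sJ[OF s] .
    have "((\<lambda>s. rh (ti (s + s0))) has_real_derivative rh t * inverse (rh t / \<rho>h t)) (at s)"
      unfolding t_def by (rule DERIV_chain2[OF rhder[OF sJ[OF s]] tsder[OF s]])
    moreover have "rh t * inverse (rh t / \<rho>h t) = \<rho>h t" using pb[OF t] by simp
    ultimately show ?thesis unfolding \<rho>_def r_def t_def by simp
  qed
  have bnd: "0 < \<rho> s \<and> \<rho> s < 1 \<and> 0 < r s" if s: "s \<in> ivl0 smax" for s
    using pb[OF sJ[OF s]] unfolding \<rho>_def r_def by blast
  have sol: "toy_solution \<beta> g \<rho> r (ivl0 smax)"
    unfolding toy_solution_def M0_def using bnd rhoder rder by force
  have pt: "\<sigma> t0' - s0 \<in> ivl0 smax" unfolding smax(1) using t0' by force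
  have evI: "eventually (\<lambda>s. s \<in> ivl0 smax) (at_right 0)" using eventually_ivl0[OF pt] .
  have tislim: "filterlim (\<lambda>s. ti (s + s0)) at_bot (at_right 0)"
  proof (rule filterlim_at_bot[THEN iffD2], intro allI)
    fix Z :: real
    obtain t1 where t1: "t1 \<in> J" "t1 < Z" using Junb by blast
    have e: "0 < \<sigma> t1 - s0" using above t1 by auto
    show "eventually (\<lambda>s. ti (s + s0) \<le> Z) (at_right 0)"
      unfolding eventually_at_right_field
    proof (intro exI[of _ "\<sigma> t1 - s0"] conjI allI impI)
      fix s :: real assume s: "0 < s" "s < \<sigma> t1 - s0"
      have "\<sigma> t1 - s0 \<in> ivl0 smax" unfolding smax(1) using t1 by force
      then have sI: "s \<in> ivl0 smax" using ivl0_down s by auto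
      have "ti (s + s0) < t1"
      proof (rule ccontr)
        assume "\<not> ti (s + s0) < t1"
        then have "\<sigma> t1 \<le> \<sigma> (ti (s + s0))" using smono[OF t1(1) sJ[OF sI]] by (cases "t1 = ti (s + s0)") auto
        then show False using sti[OF memS[OF sI]] s by simp
      qed
      then show "ti (s + s0) \<le> Z" using t1 by simp
    qed (use e in auto)
  qed
  have lrho: "(\<rho> \<longlongrightarrow> 1) (at_right 0)"
    unfolding \<rho>_def using filterlim_compose[OF rhohlim tislim] .
  have rhlim: "(rh \<longlongrightarrow> 0) at_bot"
  proof -
    have l: "((\<lambda>t. sqrt (w t)) \<longlongrightarrow> sqrt 0) at_bot" by (intro tendsto_intros wlim)
    have "eventually (\<lambda>t. sqrt (w t) = rh t) at_bot"
      by (rule eventually_mono[OF evJ]) (use prh in auto)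
    then show ?thesis using l tendsto_cong by force
  qed
  have lr: "(r \<longlongrightarrow> 0) (at_right 0)"
    unfolding r_def using filterlim_compose[OF rhlim tislim] .
  have letalim: "((\<lambda>s. sqrt (1 - (\<rho> s)\<^sup>2) / r s) \<longlongrightarrow> 1/3) (at_right 0)"
  proof -
    have l: "((\<lambda>s. \<eta> (ti (s + s0))) \<longlongrightarrow> 1/3) (at_right 0)" using filterlim_compose[OF elim tislim] .
    have "eventually (\<lambda>s. \<eta> (ti (s + s0)) = sqrt (1 - (\<rho> s)\<^sup>2) / r s) (at_right 0)"
      by (rule eventually_mono[OF evI]) (use peta sJ in \<open>auto simp: \<rho>_def r_def\<close>)
    then show ?thesis using l tendsto_cong by force
  qed
  define c where "c = w t0'"
  have cpos: "c > 0" unfolding c_def using pb[OF t0'] by simp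
  have Hqan: "real_analytic_on (\<lambda>v. 1 - v * (Ge v * Ge v)) {-c<..<c}"
    using Gean unfolding ra_iff_hat c_def[symmetric] by (auto intro!: hat_diff hat_const hat_mult hat_id)
  obtain b where b: "b > 0" "b \<le> c" "\<And>v. v \<in> {-b<..<b} \<Longrightarrow> 1 - v * (Ge v * Ge v) > 0"
    and Kan: "real_analytic_on (\<lambda>v. sqrt (1 - v * (Ge v * Ge v))) {-b<..<b}"
    using ra_sqrt_near0[OF Hqan cpos] by auto
  have ev1: "eventually (\<lambda>s. ti (s + s0) \<le> t0' - 1) (at_right 0)"
    using tislim unfolding filterlim_at_bot by blast
  have ev2: "eventually (\<lambda>s. w (ti (s + s0)) < b) (at_right 0)"
    using order_tendstoD(2)[OF filterlim_compose[OF wlim tislim] b(1)] .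
  obtain b' where b': "b' > 0" "\<And>s. 0 < s \<Longrightarrow> s < b' \<Longrightarrow> s \<in> ivl0 smax \<and> ti (s + s0) \<le> t0' - 1 \<and> w (ti (s + s0)) < b"
    using eventually_conj[OF evI eventually_conj[OF ev1 ev2]] unfolding eventually_at_right_field by blast
  define s0' where "s0' = b' / 2"
  have s0': "0 < s0'" "s0' < b'" using b' unfolding s0'_def by auto
  have s0'I: "s0' \<in> ivl0 smax" using b'(2)[OF s0'] by blast
  have rs0: "(r s0')\<^sup>2 < b"
    using b'(2)[OF s0'] pww[OF sJ[OF s0'I]] unfolding r_def by simp
  have S2: "\<exists>s0. s0 \<in> ivl0 smax \<and>
        (\<exists>G. real_analytic_on G {-((r s0)\<^sup>2)<..<(r s0)\<^sup>2} \<and>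
             (\<forall>v\<in>{-((r s0)\<^sup>2)<..<(r s0)\<^sup>2}. G v > 0) \<and>
             (\<forall>s\<in>{0<..<s0}. \<rho> s = G ((r s)\<^sup>2)))"
  proof (intro exI[of _ s0'] conjI exI[of _ "\<lambda>v. sqrt (1 - v * (Ge v * Ge v))"] ballI)
    show "s0' \<in> ivl0 smax" by fact
    show "real_analytic_on (\<lambda>v. sqrt (1 - v * (Ge v * Ge v))) {-((r s0')\<^sup>2)<..<(r s0')\<^sup>2}"
      by (rule ra_subset[OF Kan]) (use rs0 in auto)
    fix v assume "v \<in> {-((r s0')\<^sup>2)<..<(r s0')\<^sup>2}"
    then have "v \<in> {-b<..<b}" using rs0 by auto
    then show "sqrt (1 - v * (Ge v * Ge v)) > 0" using b(3) by simp
  next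
    fix s assume s: "s \<in> {0<..<s0'}"
    then have P: "s \<in> ivl0 smax" "ti (s + s0) \<le> t0' - 1" using b'(2)[of s] s0' by auto
    define t where "t = ti (s + s0)"
    have t: "t \<in> J" "t < t0'" using sJ[OF P(1)] P(2) unfolding t_def by auto
    have "\<rho> s = sqrt (1 - (\<eta> t)\<^sup>2 * w t)" unfolding \<rho>_def t_def[symmetric] by (rule prho[OF t(1)])
    also have "\<eta> t = Ge (w t)" using Geeq[OF t] .
    also have "w t = (r s)\<^sup>2" unfolding r_def t_def[symmetric] by (rule pww[OF t(1)])
    finally show "\<rho> s = sqrt (1 - (r s)\<^sup>2 * (Ge ((r s)\<^sup>2) * Ge ((r s)\<^sup>2)))"
      by (simp add: power2_eq_square algebra_simps)
  qed
  have gc: "isCont g 0" using ra_cont[OF g_an] by simp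
  have r2: "((\<lambda>s. (r s)\<^sup>2) \<longlongrightarrow> 0) (at_right 0)" using tendsto_power[OF lr, of 2] by simp
  have gl: "((\<lambda>s. g ((r s)\<^sup>2)) \<longlongrightarrow> g 0) (at_right 0)" using isCont_tendsto_compose[OF gc r2] .
  define B where "B = (\<lambda>s. -1 + sqrt (1 - (\<rho> s)\<^sup>2) / r s * (\<beta> * (r s)\<^sup>2 * g ((r s)\<^sup>2) + \<rho> s))"
  have Blim: "(B \<longlongrightarrow> -1 + 1/3 * (\<beta> * 0 * g 0 + 1)) (at_right 0)"
    unfolding B_def by (intro tendsto_intros letalim r2 gl lrho)
  have evB: "eventually (\<lambda>s. B s < 0) (at_right 0)" using order_tendstoD(2)[OF Blim] by simp
  obtain b'' where b'': "b'' > 0" "\<And>s. 0 < s \<Longrightarrow> s < b'' \<Longrightarrow> s \<in> ivl0 smax \<and> B s < 0"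
    using eventually_conj[OF evI evB] unfolding eventually_at_right_field by blast
  define s1 where "s1 = b'' / 2"
  have s1: "0 < s1" "s1 < b''" using b'' unfolding s1_def by auto
  have s1I: "s1 \<in> ivl0 smax" using b''(2)[OF s1] by blast
  have sgn: "\<exists>s0>0. ereal s0 \<le> smax \<and> (\<forall>s\<in>{0<..<s0}. deriv \<rho> s < 0 \<and> \<rho> s > 0)"
  proof (intro exI[of _ s1] conjI ballI)
    show "0 < s1" by fact
    show "ereal s1 \<le> smax" using s1I unfolding ivl0_def by auto
    fix s assume s: "s \<in> {0<..<s1}"
    then have P: "s \<in> ivl0 smax" "B s < 0" using b''(2)[of s] s1 by auto
    note bb = bnd[OF P(1)]
    have "deriv \<rho> s = toy_rhs \<beta> g (\<rho> s) (r s)" using rhoder[OF P(1)] by (rule DERIV_imp_deriv)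
    also have "\<dots> = 3/2 * (1 - (\<rho> s)\<^sup>2) / r s * B s" unfolding toy_rhs_def B_def by simp
    finally have dr: "deriv \<rho> s = 3/2 * (1 - (\<rho> s)\<^sup>2) / r s * B s" .
    have "3/2 * (1 - (\<rho> s)\<^sup>2) / r s > 0" using bb rho_sq[of "\<rho> s"] by simp
    then show "deriv \<rho> s < 0" unfolding dr using P(2) by (rule mult_pos_neg)
    show "\<rho> s > 0" using bb by simp
  qed
  have e0: "\<exists>\<eta>0>0. ((\<lambda>s. sqrt (1 - (\<rho> s)\<^sup>2) / r s) \<longlongrightarrow> \<eta>0) (at_right 0)"
    using letalim by (intro exI[of _ "1/3"]) auto
  have tip: "toy_tip_solution \<beta> g \<rho> r smax"
    unfolding toy_tip_solution_def by (intro conjI smax(2) sol lrho lr e0 S2 sgn)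
  show "diffeo_onto_range \<sigma> J \<and>
       (\<exists>s0::real. (\<sigma> \<longlongrightarrow> s0) at_bot \<and>
          (\<exists>smax. ivl0 smax = (\<lambda>s. s - s0) ` (\<sigma> ` J) \<and>
             toy_tip_solution \<beta> g
               (\<lambda>s. \<rho>h (the_inv_into J \<sigma> (s + s0)))
               (\<lambda>s. rh (the_inv_into J \<sigma> (s + s0))) smax))"
    using D(7) s0lim smax(1) tip unfolding \<rho>_def r_def ti_def by blast
qed


theorem lemmaA1:
  fixes g :: "real \<Rightarrow> real" and \<beta> :: real
  assumes g_an: "real_analytic_on g UNIV"
    and g_pos: "\<forall>v>0. g v > 0"
  shows
   "(\<forall>\<rho> r smax sstar s1 \<tau>.
       toy_tip_solution \<beta> g \<rho> r smax \<and> 0 < sstar \<and> sstar \<le> smax \<and>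
       (\<forall>s\<in>ivl0 sstar. \<rho> s > 0) \<and> s1 \<in> ivl0 sstar \<and>
       (\<forall>s\<in>ivl0 sstar. (\<tau> has_real_derivative \<rho> s / r s) (at s)) \<and> \<tau> s1 = 0
       \<longrightarrow>
       diffeo_onto_range \<tau> (ivl0 sstar) \<and>
       filterlim \<tau> at_bot (at_right 0) \<and>
       toy_t_tip_solution \<beta> g
         (\<lambda>t. fst (Phi (\<rho> (the_inv_into (ivl0 sstar) \<tau> t), r (the_inv_into (ivl0 sstar) \<tau> t))))
         (\<lambda>t. snd (Phi (\<rho> (the_inv_into (ivl0 sstar) \<tau> t), r (the_inv_into (ivl0 sstar) \<tau> t))))
         (\<tau> ` ivl0 sstar))
    \<and>
    (\<forall>\<eta> w J t0 \<sigma> \<rho>h rh.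
       toy_t_tip_solution \<beta> g \<eta> w J \<and> (\<forall>t\<in>J. (\<eta> t, w t) \<in> N0) \<and>
       (\<forall>t\<in>J. (\<rho>h t, rh t) \<in> M1 \<and> Phi (\<rho>h t, rh t) = (\<eta> t, w t)) \<and>
       t0 \<in> J \<and>
       (\<forall>t\<in>J. (\<sigma> has_real_derivative rh t / \<rho>h t) (at t)) \<and> \<sigma> t0 = 0
       \<longrightarrow>
       diffeo_onto_range \<sigma> J \<and>
       (\<exists>s0::real. (\<sigma> \<longlongrightarrow> s0) at_bot \<and>
          (\<exists>smax. ivl0 smax = (\<lambda>s. s - s0) ` (\<sigma> ` J) \<and>
             toy_tip_solution \<beta> g
               (\<lambda>s. \<rho>h (the_inv_into J \<sigma> (s + s0)))
               (\<lambda>s. rh (the_inv_into J \<sigma> (s + s0))) smax)))"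
    using conjI[OF part1[OF g_an] part2[OF g_an]] .

end
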